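(* Consider the variational problem over $C^2$ families of positive definite matrices $\Sigma(s,t)\in\mathbb{R}^{n\times n}$ and matrices $A_s(s,t),A_t(s,t)\in\mathbb{R}^{n\times n}$, $(s,t)\in[0,1]^2$: $$\inf_{A_s,A_t,\Sigma}\int_0^1\int_0^1 J\,ds\,dt,\qquad J=J(\Sigma,A_s,A_t)=\sqrt{\mathrm{tr}(\Sigma A_s^{\mathsf{T}}A_s)\, \mathrm{tr}(\Sigma A_t^{\mathsf{T}} A_t)-\Big[\tfrac{1}{2}\mathrm{tr}\big(\Sigma(A_s^{\mathsf{T}}A_t+A_t^{\mathsf{T}}A_s)\big)\Big]^2},$$ subject to $\partial_s\Sigma=\Sigma A_s^{\mathsf{T}}+A_s\Sigma$, $\partial_t\Sigma=\Sigma A_t^{\mathsf{T}}+A_t\Sigma$, with $\Sigma(0,t),\Sigma(1,t),\Sigma(s,0),\Sigma(s,1)$ fixed. Let $S_s,S_t\colon[0,1]^2\to\mathbb{R}^{n\times n}$ be the Lagrange multipliers of the constraints for $\partial_s\Sigma$ and $\partial_t\Sigma$, respectively. Then $S_s=S_s^{\mathsf{T}}$, $S_t=S_t^{\mathsf{T}}$, and the critical-point system of the problem consists of $$J^{-1}\Big(A_s\, \mathrm{tr}(\Sigma A_t^{\mathsf{T}}A_t)-\tfrac{1}{2}A_t\, \mathrm{tr}(\Sigma (A_s^{\mathsf{T}}A_t+A_t^{\mathsf{T}}A_s))\Big)=2S_s,\qquad J^{-1}\Big(A_t\, \mathrm{tr}(\Sigma A_s^{\mathsf{T}}A_s)-\tfrac{1}{2}A_s\,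 \mathrm{tr}(\Sigma (A_s^{\mathsf{T}}A_t+A_t^{\mathsf{T}}A_s))\Big)=2S_t,$$ $$\partial_s S_s+\partial_t S_t+\tfrac{1}{2}J^{-1}\Big\{A_s^{\mathsf{T}}A_s\, \mathrm{tr}(\Sigma A_t^{\mathsf{T}}A_t)+A_t^{\mathsf{T}}A_t\,\mathrm{tr}(\Sigma A_s^{\mathsf{T}}A_s)-\tfrac{1}{2}(A_s^{\mathsf{T}}A_t+A_t^{\mathsf{T}}A_s)\,\mathrm{tr}(\Sigma (A_s^{\mathsf{T}}A_t+A_t^{\mathsf{T}}A_s))\Big\}=0,$$ $$\partial_s\Sigma=\Sigma A_s^{\mathsf{T}}+A_s\Sigma,\qquad \partial_t\Sigma=\Sigma A_t^{\mathsf{T}}+A_t\Sigma.$$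
   Context: The Lagrange multipliers enter through the Lagrangian $\int_0^1\int_0^1 J+\mathrm{tr}\big(S_s(\partial_s\Sigma-\Sigma A_s^{\mathsf{T}}-A_s\Sigma)\big)+\mathrm{tr}\big(S_t(\partial_t\Sigma-\Sigma A_t^{\mathsf{T}}-A_t\Sigma)\big)\,ds\,dt$; the critical-point system is obtained by setting the first variations with respect to $\Sigma,A_s,A_t,S_s,S_t$ to zero. *)

theory Defs
  imports "HOL-Analysis.Analysis"
begin

type_synonym 'n rmat = "real^'n^'n"
type_synonym 'n field2 = "real \<times> real \<Rightarrow> ('n::finite) rmat"

definition Q :: "(real \<times> real) set" where
  "Q = {0..1} \<times> {0..1}"

definition on_boundary :: "real \<times> real \<Rightarrow> bool" where
  "on_boundary p \<longleftrightarrow> fst p \<in> {0,1} \<or> snd p \<in> {0,1}"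

definition pd_s :: "(real \<times> real \<Rightarrow> 'a::real_normed_vector) \<Rightarrow> real \<times> real \<Rightarrow> 'a" where
  "pd_s F p = vector_derivative (\<lambda>s. F (s, snd p)) (at (fst p) within {0..1})"

definition pd_t :: "(real \<times> real \<Rightarrow> 'a::real_normed_vector) \<Rightarrow> real \<times> real \<Rightarrow> 'a" where
  "pd_t F p = vector_derivative (\<lambda>t. F (fst p, t)) (at (snd p) within {0..1})"

definition C1 :: "(real \<times> real \<Rightarrow> 'a::real_normed_vector) \<Rightarrow> bool" where
  "C1 F \<longleftrightarrow> continuous_on Q F
     \<and> (\<forall>p\<in>Q. (\<lambda>s. F (s, snd p)) differentiable (at (fst p) within {0..1})
              \<and> (\<lambda>t. F (fst p, t)) differentiable (at (snd p) within {0..1}))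
     \<and> continuous_on Q (pd_s F) \<and> continuous_on Q (pd_t F)"

definition C2 :: "(real \<times> real \<Rightarrow> 'a::real_normed_vector) \<Rightarrow> bool" where
  "C2 F \<longleftrightarrow> C1 F \<and> C1 (pd_s F) \<and> C1 (pd_t F)"

definition symmetric :: "('n::finite) rmat \<Rightarrow> bool" where
  "symmetric M \<longleftrightarrow> transpose M = M"

definition pos_def :: "('n::finite) rmat \<Rightarrow> bool" where
  "pos_def M \<longleftrightarrow> transpose M = M \<and> (\<forall>x. x \<noteq> 0 \<longrightarrow> x \<bullet> (M *v x) > 0)"

definition Jf :: "('n::finite) rmat \<Rightarrow> ('n::finite) rmat \<Rightarrow> ('n::finite) rmat \<Rightarrow> real" where
  "Jf S As At = sqrt (trace (S ** transpose As ** As) * trace (S ** transpose At ** At)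
      - ((1/2) * trace (S ** (transpose As ** At + transpose At ** As)))^2)"

definition Lag :: "('n::finite) field2 \<Rightarrow> ('n::finite) field2 \<Rightarrow> ('n::finite) field2 \<Rightarrow> ('n::finite) field2 \<Rightarrow> ('n::finite) field2 \<Rightarrow> real" where
  "Lag Sg As At Ss St = integral Q (\<lambda>p.
      Jf (Sg p) (As p) (At p)
      + trace (Ss p ** (pd_s Sg p - Sg p ** transpose (As p) - As p ** Sg p))
      + trace (St p ** (pd_t Sg p - Sg p ** transpose (At p) - At p ** Sg p)))"

text \<open>Admissible variations: Sigma-variations are C^2, symmetric-valued and vanish on the
  boundary (boundary values of Sigma fixed); A-variations are arbitrary C^2 fields;
  multiplier variations are arbitrary C^1 fields.\<close>
definition adm_Sigma_var :: "('n::finite) field2 \<Rightarrow> bool" where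
  "adm_Sigma_var D \<longleftrightarrow> C2 D \<and> (\<forall>p\<in>Q. symmetric (D p)) \<and> (\<forall>p\<in>Q. on_boundary p \<longrightarrow> D p = 0)"

definition critical :: "('n::finite) field2 \<Rightarrow> ('n::finite) field2 \<Rightarrow> ('n::finite) field2 \<Rightarrow> ('n::finite) field2 \<Rightarrow> ('n::finite) field2 \<Rightarrow> bool" where
  "critical Sg As At Ss St \<longleftrightarrow>
     (\<forall>D. adm_Sigma_var D \<longrightarrow>
        ((\<lambda>e. Lag (\<lambda>p. Sg p + e *\<^sub>R D p) As At Ss St) has_real_derivative 0) (at 0))
   \<and> (\<forall>D. C2 D \<longrightarrow>
        ((\<lambda>e. Lag Sg (\<lambda>p. As p + e *\<^sub>R D p) At Ss St) has_real_derivative 0) (at 0))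
   \<and> (\<forall>D. C2 D \<longrightarrow>
        ((\<lambda>e. Lag Sg As (\<lambda>p. At p + e *\<^sub>R D p) Ss St) has_real_derivative 0) (at 0))
   \<and> (\<forall>D. C1 D \<longrightarrow>
        ((\<lambda>e. Lag Sg As At (\<lambda>p. Ss p + e *\<^sub>R D p) St) has_real_derivative 0) (at 0))
   \<and> (\<forall>D. C1 D \<longrightarrow>
        ((\<lambda>e. Lag Sg As At Ss (\<lambda>p. St p + e *\<^sub>R D p)) has_real_derivative 0) (at 0))"

definition cp_system :: "('n::finite) field2 \<Rightarrow> ('n::finite) field2 \<Rightarrow> ('n::finite) field2 \<Rightarrow> ('n::finite) field2 \<Rightarrow> ('n::finite) field2 \<Rightarrow> bool" where
  "cp_system Sg As At Ss St \<longleftrightarrow> (\<forall>p\<in>Q.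
     let S = Sg p; a = As p; b = At p; J = Jf S a b;
         Taa = trace (S ** transpose a ** a); Tbb = trace (S ** transpose b ** b);
         M = transpose a ** b + transpose b ** a; Tab = trace (S ** M)
     in (inverse J *\<^sub>R (Tbb *\<^sub>R a - ((1/2) * Tab) *\<^sub>R b) = 2 *\<^sub>R Ss p)
      \<and> (inverse J *\<^sub>R (Taa *\<^sub>R b - ((1/2) * Tab) *\<^sub>R a) = 2 *\<^sub>R St p)
      \<and> (pd_s Ss p + pd_t St p + ((1/2) * inverse J) *\<^sub>R
           (Tbb *\<^sub>R (transpose a ** a) + Taa *\<^sub>R (transpose b ** b) - ((1/2) * Tab) *\<^sub>R M) = 0)
      \<and> pd_s Sg p = S ** transpose a + a ** S
      \<and> pd_t Sg p = S ** transpose b + b ** S)"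

definition symm_part :: "('n::finite) field2 \<Rightarrow> ('n::finite) field2" where
  "symm_part F = (\<lambda>p. (1/2) *\<^sub>R (F p + transpose (F p)))"

end

theory Submission
  imports Defs
begin

lemma mm_add_left: "((A::real^'n^'m) + B) ** (C::real^'p^'n) = A ** C + B ** C"
  by (simp add: matrix_matrix_mult_def vec_eq_iff sum.distrib distrib_right)
lemma mm_scaleR_left: "((r::real) *\<^sub>R (A::real^'n^'m)) ** (C::real^'p^'n) = r *\<^sub>R (A ** C)"
  by (simp add: matrix_matrix_mult_def vec_eq_iff sum_distrib_left mult.assoc)
lemma mm_scaleR_right: "(A::real^'n^'m) ** ((r::real) *\<^sub>R (C::real^'p^'n)) = r *\<^sub>R (A ** C)"
  by (simp add: matrix_matrix_mult_def vec_eq_iff sum_distrib_left algebra_simps)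

lemma bilinear_mm: "bilinear (\<lambda>(A::real^'n^'m) (B::real^'p^'n). A ** B)"
  unfolding bilinear_def linear_iff
  by (auto simp: matrix_add_ldistrib mm_add_left mm_scaleR_left mm_scaleR_right)

lemma bb_mm: "bounded_bilinear (\<lambda>(A::real^'n^'m) (B::real^'p^'n). A ** B)"
  using bilinear_mm bilinear_conv_bounded_bilinear by blast

lemma bl_trace: "bounded_linear (trace :: real^'n^'n \<Rightarrow> real)"
  by (subst linear_conv_bounded_linear[symmetric]) (simp add: linear_iff trace_def sum_distrib_left sum.distrib)

lemma bl_transpose: "bounded_linear (transpose :: real^'n^'m \<Rightarrow> real^'m^'n)"
  by (subst linear_conv_bounded_linear[symmetric]) (simp add: linear_iff transpose_def vec_eq_iff)

lemmas mm_simps = bounded_bilinear.add_left[OF bb_mm] bounded_bilinear.add_right[OF bb_mm]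
  bounded_bilinear.diff_left[OF bb_mm] bounded_bilinear.diff_right[OF bb_mm]
  bounded_bilinear.minus_left[OF bb_mm] bounded_bilinear.minus_right[OF bb_mm]
  bounded_bilinear.zero_left[OF bb_mm] bounded_bilinear.zero_right[OF bb_mm]
  bounded_bilinear.scaleR_left[OF bb_mm] bounded_bilinear.scaleR_right[OF bb_mm]

lemmas tr_simps = linear_simps[OF bl_trace]
lemmas tp_simps = linear_simps[OF bl_transpose]

lemma trace_transpose: "trace (transpose (A::real^'n^'n)) = trace A"
  by (simp add: trace_def transpose_def)

lemma cont_mm[continuous_intros]:
  "continuous_on S f \<Longrightarrow> continuous_on S g \<Longrightarrow> continuous_on S (\<lambda>x. (f x::real^'n^'m) ** (g x::real^'p^'n))"
  by (rule bounded_bilinear.continuous_on[OF bb_mm])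
lemma cont_tr[continuous_intros]:
  "continuous_on S f \<Longrightarrow> continuous_on S (\<lambda>x. trace (f x::real^'n^'n))"
  by (rule bounded_linear.continuous_on[OF bl_trace])
lemma cont_tp[continuous_intros]:
  "continuous_on S f \<Longrightarrow> continuous_on S (\<lambda>x. transpose (f x::real^'n^'m))"
  by (rule bounded_linear.continuous_on[OF bl_transpose])

lemma vd_mm:
  "(f has_vector_derivative f') (at x within s) \<Longrightarrow> (g has_vector_derivative g') (at x within s) \<Longrightarrow>
   ((\<lambda>x. (f x::real^'n^'m) ** (g x::real^'p^'n)) has_vector_derivative (f' ** g x + f x ** g')) (at x within s)"
  using bounded_bilinear.has_vector_derivative[OF bb_mm] by (simp add: add.commute)
lemma vd_tr:
  "(f has_vector_derivative f') F \<Longrightarrow> ((\<lambda>x. trace (f x::real^'n^'n)) has_vector_derivative trace f') F"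
  by (rule bounded_linear.has_vector_derivative[OF bl_trace])
lemma vd_tp:
  "(f has_vector_derivative f') F \<Longrightarrow> ((\<lambda>x. transpose (f x::real^'n^'m)) has_vector_derivative transpose f') F"
  by (rule bounded_linear.has_vector_derivative[OF bl_transpose])

lemma Q_cbox: "Q = cbox (0,0) (1,1)"
  by (simp add: Q_def cbox_Pair_eq)

lemma cbox01: "cbox 0 (1::real) = {0..1}" by auto

lemma compact_Q: "compact Q" by (simp add: Q_cbox)

lemma Q_mem: "(s,t) \<in> Q \<longleftrightarrow> s \<in> {0..1} \<and> t \<in> {0..1}" by (simp add: Q_def)

lemma Q_memI_s: "p \<in> Q \<Longrightarrow> s \<in> {0..1} \<Longrightarrow> (s, snd p) \<in> Q" by (auto simp: Q_def)
lemma Q_memI_t: "p \<in> Q \<Longrightarrow> t \<in> {0..1} \<Longrightarrow> (fst p, t) \<in> Q" by (auto simp: Q_def)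
lemma Q_fst: "p \<in> Q \<Longrightarrow> fst p \<in> {0..1}" by (auto simp: Q_def)
lemma Q_snd: "p \<in> Q \<Longrightarrow> snd p \<in> {0..1}" by (auto simp: Q_def)

lemma vd_unique01:
  assumes "x \<in> {0..1::real}" "(f has_vector_derivative X) (at x within {0..1})"
  shows "vector_derivative f (at x within {0..1}) = X"
  using vector_derivative_within_cbox[of 0 1 x f X] assms by (simp add: cbox01)

lemma C1_cont: assumes "C1 F" shows "continuous_on Q F" "continuous_on Q (pd_s F)" "continuous_on Q (pd_t F)"
  using assms by (auto simp: C1_def)

lemma C1_vd_s: assumes "C1 F" "p \<in> Q"
  shows "((\<lambda>s. F (s, snd p)) has_vector_derivative pd_s F p) (at (fst p) within {0..1})"
  using assms unfolding C1_def pd_s_def by (simp add: vector_derivative_works[symmetric])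

lemma C1_vd_t: assumes "C1 F" "p \<in> Q"
  shows "((\<lambda>t. F (fst p, t)) has_vector_derivative pd_t F p) (at (snd p) within {0..1})"
  using assms unfolding C1_def pd_t_def by (simp add: vector_derivative_works[symmetric])

lemma pd_s_eqI: assumes "p \<in> Q" "((\<lambda>s. F (s, snd p)) has_vector_derivative X) (at (fst p) within {0..1})"
  shows "pd_s F p = X"
  unfolding pd_s_def using vd_unique01 assms Q_fst by blast

lemma pd_t_eqI: assumes "p \<in> Q" "((\<lambda>t. F (fst p, t)) has_vector_derivative X) (at (snd p) within {0..1})"
  shows "pd_t F p = X"
  unfolding pd_t_def using vd_unique01 assms Q_snd by blast

lemma C2_C1: "C2 F \<Longrightarrow> C1 F" by (simp add: C2_def)

lemma C1_cong:
  assumes F: "C1 F" and eq: "\<And>p. p \<in> Q \<Longrightarrow> F p = G p"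
  shows "C1 G"
proof -
  have ds: "((\<lambda>s. G (s, snd p)) has_vector_derivative pd_s F p) (at (fst p) within {0..1})" if "p \<in> Q" for p
    by (rule has_vector_derivative_transform[OF Q_fst[OF that] _ C1_vd_s[OF F that]])
       (use eq Q_memI_s[OF that] in auto)
  have dt: "((\<lambda>t. G (fst p, t)) has_vector_derivative pd_t F p) (at (snd p) within {0..1})" if "p \<in> Q" for p
    by (rule has_vector_derivative_transform[OF Q_snd[OF that] _ C1_vd_t[OF F that]])
       (use eq Q_memI_t[OF that] in auto)
  have "continuous_on Q G" using C1_cont(1)[OF F] eq continuous_on_cong by blast
  moreover have "continuous_on Q (pd_s G)"
    using C1_cont(2)[OF F] continuous_on_cong pd_s_eqI[OF _ ds] by (metis (no_types, lifting))
  moreover have "continuous_on Q (pd_t G)"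
    using C1_cont(3)[OF F] continuous_on_cong pd_t_eqI[OF _ dt] by (metis (no_types, lifting))
  moreover have "\<forall>p\<in>Q. (\<lambda>s. G (s, snd p)) differentiable (at (fst p) within {0..1})
              \<and> (\<lambda>t. G (fst p, t)) differentiable (at (snd p) within {0..1})"
    using ds dt unfolding differentiable_def has_vector_derivative_def by blast
  ultimately show ?thesis unfolding C1_def by blast
qed


section \<open>Polynomials are C2\<close>

lemma rpf_partials:
  fixes \<phi> :: "real \<times> real \<Rightarrow> real"
  assumes "real_polynomial_function \<phi>"
  shows "\<exists>\<phi>s \<phi>t. real_polynomial_function \<phi>s \<and> real_polynomial_function \<phi>t
     \<and> (\<forall>x. ((\<lambda>s. \<phi> (s, snd x)) has_real_derivative \<phi>s x) (at (fst x)))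
     \<and> (\<forall>x. ((\<lambda>t. \<phi> (fst x, t)) has_real_derivative \<phi>t x) (at (snd x)))"
  using assms
proof (induct \<phi>)
  case (linear f)
  have e1: "f (s, y) = s * f (1,0) + f (0,y)" for s y
  proof -
    have "f (s, y) = f (s *\<^sub>R (1,0) + (0,y))" by simp
    also have "\<dots> = f (s *\<^sub>R (1,0)) + f ((0,y))" by (rule linear_add[OF bounded_linear.linear[OF linear.hyps]])
    also have "\<dots> = s * f (1,0) + f (0,y)" by (simp only: linear_scale[OF bounded_linear.linear[OF linear.hyps]] real_scaleR_def)
    finally show ?thesis .
  qed
  have e2: "f (x, t) = t * f (0,1) + f (x,0)" for x t
  proof -
    have "f (x, t) = f (t *\<^sub>R (0,1) + (x,0))" by simp
    also have "\<dots> = f (t *\<^sub>R (0,1)) + f ((x,0))" by (rule linear_add[OF bounded_linear.linear[OF linear.hyps]])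
    also have "\<dots> = t * f (0,1) + f (x,0)" by (simp only: linear_scale[OF bounded_linear.linear[OF linear.hyps]] real_scaleR_def)
    finally show ?thesis .
  qed
  show ?case
    apply (rule exI[of _ "\<lambda>x. f (1,0)"], rule exI[of _ "\<lambda>x. f (0,1)"])
  proof (intro conjI allI)
    show "real_polynomial_function (\<lambda>x. f (1,0))" "real_polynomial_function (\<lambda>x. f (0,1))" by auto
    fix x :: "real \<times> real"
    have "((\<lambda>s. s * f (1,0) + f (0, snd x)) has_real_derivative f (1,0)) (at (fst x))"
      by (auto intro!: derivative_eq_intros)
    then show "((\<lambda>s. f (s, snd x)) has_real_derivative f (1,0)) (at (fst x))"
      using ext[of "\<lambda>s. f (s, snd x)" "\<lambda>s. s * f (1,0) + f (0, snd x)", OF e1] by simp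
    have "((\<lambda>t. t * f (0,1) + f (fst x, 0)) has_real_derivative f (0,1)) (at (snd x))"
      by (auto intro!: derivative_eq_intros)
    then show "((\<lambda>t. f (fst x, t)) has_real_derivative f (0,1)) (at (snd x))"
      using ext[of "\<lambda>t. f (fst x, t)" "\<lambda>t. t * f (0,1) + f (fst x, 0)", OF e2] by simp
  qed
next
  case (const c)
  show ?case by (rule exI[of _ "\<lambda>x. 0"], rule exI[of _ "\<lambda>x. 0"]) auto
next
  case (add f1 f2)
  then obtain p1 q1 p2 q2 where r: "real_polynomial_function p1" "real_polynomial_function q1"
    "real_polynomial_function p2" "real_polynomial_function q2"
    and d: "\<And>x. ((\<lambda>s. f1 (s, snd x)) has_real_derivative p1 x) (at (fst x))"
    "\<And>x. ((\<lambda>t. f1 (fst x, t)) has_real_derivative q1 x) (at (snd x))"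
    "\<And>x. ((\<lambda>s. f2 (s, snd x)) has_real_derivative p2 x) (at (fst x))"
    "\<And>x. ((\<lambda>t. f2 (fst x, t)) has_real_derivative q2 x) (at (snd x))" by metis
  have "real_polynomial_function (\<lambda>x. p1 x + p2 x)" "real_polynomial_function (\<lambda>x. q1 x + q2 x)"
    using r by auto
  moreover have "((\<lambda>s. f1 (s, snd x) + f2 (s, snd x)) has_real_derivative p1 x + p2 x) (at (fst x))" for x
    using d(1)[of x] d(3)[of x] by (rule DERIV_add)
  moreover have "((\<lambda>t. f1 (fst x, t) + f2 (fst x, t)) has_real_derivative q1 x + q2 x) (at (snd x))" for x
    using d(2)[of x] d(4)[of x] by (rule DERIV_add)
  ultimately show ?case by blast
next
  case (mult f1 f2)
  then obtain p1 q1 p2 q2 where r: "real_polynomial_function p1" "real_polynomial_function q1"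
    "real_polynomial_function p2" "real_polynomial_function q2"
    and d: "\<And>x. ((\<lambda>s. f1 (s, snd x)) has_real_derivative p1 x) (at (fst x))"
    "\<And>x. ((\<lambda>t. f1 (fst x, t)) has_real_derivative q1 x) (at (snd x))"
    "\<And>x. ((\<lambda>s. f2 (s, snd x)) has_real_derivative p2 x) (at (fst x))"
    "\<And>x. ((\<lambda>t. f2 (fst x, t)) has_real_derivative q2 x) (at (snd x))" by metis
  have "real_polynomial_function (\<lambda>x. p1 x * f2 x + p2 x * f1 x)" "real_polynomial_function (\<lambda>x. q1 x * f2 x + q2 x * f1 x)"
    using r mult.hyps by auto
  moreover have "((\<lambda>s. f1 (s, snd x) * f2 (s, snd x)) has_real_derivative p1 x * f2 x + p2 x * f1 x) (at (fst x))" for x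
    using DERIV_mult[OF d(1)[of x] d(3)[of x]] by simp
  moreover have "((\<lambda>t. f1 (fst x, t) * f2 (fst x, t)) has_real_derivative q1 x * f2 x + q2 x * f1 x) (at (snd x))" for x
    using DERIV_mult[OF d(2)[of x] d(4)[of x]] by simp
  ultimately show ?case by blast
qed

lemma rpf_cont: "real_polynomial_function (\<phi> :: real \<times> real \<Rightarrow> real) \<Longrightarrow> continuous_on S \<phi>"
  by (simp add: continuous_on_polymonial_function real_polynomial_function_eq)

lemma C1_poly:
  fixes \<phi> :: "real \<times> real \<Rightarrow> real" and E :: "real^'n^'n"
  assumes "real_polynomial_function \<phi>"
  shows "C1 (\<lambda>p. \<phi> p *\<^sub>R E)"
    and "\<exists>\<phi>s \<phi>t. real_polynomial_function \<phi>s \<and> real_polynomial_function \<phi>t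
     \<and> (\<forall>p\<in>Q. pd_s (\<lambda>p. \<phi> p *\<^sub>R E) p = \<phi>s p *\<^sub>R E) \<and> (\<forall>p\<in>Q. pd_t (\<lambda>p. \<phi> p *\<^sub>R E) p = \<phi>t p *\<^sub>R E)"
proof -
  obtain \<phi>s \<phi>t where ps: "real_polynomial_function \<phi>s" and pt: "real_polynomial_function \<phi>t"
     and ds: "\<And>x. ((\<lambda>s. \<phi> (s, snd x)) has_real_derivative \<phi>s x) (at (fst x))"
     and dt: "\<And>x. ((\<lambda>t. \<phi> (fst x, t)) has_real_derivative \<phi>t x) (at (snd x))"
    using rpf_partials[OF assms] by blast
  have vs: "((\<lambda>s. \<phi> (s, snd x) *\<^sub>R E) has_vector_derivative \<phi>s x *\<^sub>R E) (at (fst x) within {0..1})" for x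
  proof -
    have "((\<lambda>s. \<phi> (s, snd x) *\<^sub>R E) has_vector_derivative \<phi>s x *\<^sub>R E) (at (fst x))"
      using has_vector_derivative_scaleR[OF ds[of x] has_vector_derivative_const[of E]] by simp
    then show ?thesis by (rule has_vector_derivative_at_within)
  qed
  have vt: "((\<lambda>t. \<phi> (fst x, t) *\<^sub>R E) has_vector_derivative \<phi>t x *\<^sub>R E) (at (snd x) within {0..1})" for x
  proof -
    have "((\<lambda>t. \<phi> (fst x, t) *\<^sub>R E) has_vector_derivative \<phi>t x *\<^sub>R E) (at (snd x))"
      using has_vector_derivative_scaleR[OF dt[of x] has_vector_derivative_const[of E]] by simp
    then show ?thesis by (rule has_vector_derivative_at_within)
  qed
  have es: "\<forall>p\<in>Q. pd_s (\<lambda>p. \<phi> p *\<^sub>R E) p = \<phi>s p *\<^sub>R E"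
    using pd_s_eqI[where F="\<lambda>p. \<phi> p *\<^sub>R E"] vs by simp
  have et: "\<forall>p\<in>Q. pd_t (\<lambda>p. \<phi> p *\<^sub>R E) p = \<phi>t p *\<^sub>R E"
    using pd_t_eqI[where F="\<lambda>p. \<phi> p *\<^sub>R E"] vt by simp
  show "\<exists>\<phi>s \<phi>t. real_polynomial_function \<phi>s \<and> real_polynomial_function \<phi>t
     \<and> (\<forall>p\<in>Q. pd_s (\<lambda>p. \<phi> p *\<^sub>R E) p = \<phi>s p *\<^sub>R E) \<and> (\<forall>p\<in>Q. pd_t (\<lambda>p. \<phi> p *\<^sub>R E) p = \<phi>t p *\<^sub>R E)"
    using ps pt es et by blast
  have c: "continuous_on Q (\<lambda>p. f p *\<^sub>R E)" if "real_polynomial_function f" for f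
    using rpf_cont[OF that] by (intro continuous_intros)
  have "continuous_on Q (pd_s (\<lambda>p. \<phi> p *\<^sub>R E))" by (rule continuous_on_eq[OF c[OF ps]]) (use es in simp)
  moreover have "continuous_on Q (pd_t (\<lambda>p. \<phi> p *\<^sub>R E))" by (rule continuous_on_eq[OF c[OF pt]]) (use et in simp)
  moreover have "\<forall>p\<in>Q. (\<lambda>s. \<phi> (s, snd p) *\<^sub>R E) differentiable (at (fst p) within {0..1})
              \<and> (\<lambda>t. \<phi> (fst p, t) *\<^sub>R E) differentiable (at (snd p) within {0..1})"
    using vs vt unfolding differentiable_def has_vector_derivative_def by blast
  ultimately show "C1 (\<lambda>p. \<phi> p *\<^sub>R E)" using c[OF assms] unfolding C1_def by blast
qed

lemma C2_poly:
  fixes \<phi> :: "real \<times> real \<Rightarrow> real" and E :: "real^'n^'n"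
  assumes "real_polynomial_function \<phi>"
  shows "C2 (\<lambda>p. \<phi> p *\<^sub>R E)"
proof -
  obtain \<phi>s \<phi>t where ps: "real_polynomial_function \<phi>s" and pt: "real_polynomial_function \<phi>t"
     and es: "\<forall>p\<in>Q. pd_s (\<lambda>p. \<phi> p *\<^sub>R E) p = \<phi>s p *\<^sub>R E"
     and et: "\<forall>p\<in>Q. pd_t (\<lambda>p. \<phi> p *\<^sub>R E) p = \<phi>t p *\<^sub>R E"
    using C1_poly(2)[OF assms, of E] by blast
  have "C1 (pd_s (\<lambda>p. \<phi> p *\<^sub>R E))" by (rule C1_cong[OF C1_poly(1)[OF ps]]) (use es in auto)
  moreover have "C1 (pd_t (\<lambda>p. \<phi> p *\<^sub>R E))" by (rule C1_cong[OF C1_poly(1)[OF pt]]) (use et in auto)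
  ultimately show ?thesis using C1_poly(1)[OF assms] unfolding C2_def by blast
qed


section \<open>Density lemmas\<close>

lemma integrable_Q: "continuous_on Q (f::real\<times>real\<Rightarrow>'a::banach) \<Longrightarrow> f integrable_on Q"
  unfolding Q_cbox using integrable_continuous by blast

lemma box_Q_ne: "box (0::real,0::real) (1,1) \<noteq> {}"
  by (simp add: box_ne_empty inner_Pair Basis_prod_def)

lemma dens_scalar:
  fixes r :: "real \<times> real \<Rightarrow> real"
  assumes cr: "continuous_on Q r"
    and h: "\<And>\<phi>. real_polynomial_function \<phi> \<Longrightarrow> integral Q (\<lambda>p. \<phi> p * r p) = 0"
  shows "\<forall>p\<in>Q. r p = 0"
proof -
  define I where "I = integral Q (\<lambda>p. r p * r p)"
  define B where "B = integral Q (\<lambda>p. \<bar>r p\<bar>)"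
  have cabs: "continuous_on Q (\<lambda>p. \<bar>r p\<bar>)" using cr by (intro continuous_intros)
  have B0: "B \<ge> 0" unfolding B_def by (rule integral_nonneg[OF integrable_Q[OF cabs]]) auto
  have I0: "I \<ge> 0" unfolding I_def by (rule integral_nonneg[OF integrable_Q]) (use cr in \<open>auto intro!: continuous_intros\<close>)
  have IB: "I \<le> e * B" if e: "e > 0" for e
  proof -
    obtain g where g: "real_polynomial_function g" and ge: "\<And>x. x \<in> Q \<Longrightarrow> \<bar>r x - g x\<bar> < e"
      using Stone_Weierstrass_real_polynomial_function[OF compact_Q cr e] by blast
    have cg: "continuous_on Q g" by (rule rpf_cont[OF g])
    have "I = integral Q (\<lambda>p. (r p - g p) * r p + g p * r p)" unfolding I_def
      by (simp add: algebra_simps)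
    also have "\<dots> = integral Q (\<lambda>p. (r p - g p) * r p) + integral Q (\<lambda>p. g p * r p)"
      by (rule integral_add; rule integrable_Q) (use cr cg in \<open>auto intro!: continuous_intros\<close>)
    also have "\<dots> = integral Q (\<lambda>p. (r p - g p) * r p)" using h[OF g] by simp
    also have "\<dots> \<le> integral Q (\<lambda>p. e * \<bar>r p\<bar>)"
    proof (rule integral_le; (rule integrable_Q)?)
      show "continuous_on Q (\<lambda>p. (r p - g p) * r p)" using cr cg by (auto intro!: continuous_intros)
      show "continuous_on Q (\<lambda>p. e * \<bar>r p\<bar>)" using cr by (auto intro!: continuous_intros)
      fix x assume x: "x \<in> Q"
      have "(r x - g x) * r x \<le> \<bar>r x - g x\<bar> * \<bar>r x\<bar>" by (metis abs_ge_self abs_mult)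
      also have "\<dots> \<le> e * \<bar>r x\<bar>" using ge[OF x] by (simp add: mult_right_mono)
      finally show "(r x - g x) * r x \<le> e * \<bar>r x\<bar>" .
    qed
    also have "\<dots> = e * B" unfolding B_def by simp
    finally show ?thesis .
  qed
  have "I = 0"
  proof (rule ccontr)
    assume "I \<noteq> 0" then have Ip: "I > 0" using I0 by simp
    show False
    proof (cases "B = 0")
      case True then show ?thesis using IB[of 1] Ip by simp
    next
      case False then have "B > 0" using B0 by simp
      then have "I \<le> (I / (2*B)) * B" using IB[of "I/(2*B)"] Ip by simp
      also have "\<dots> = I / 2" using \<open>B > 0\<close> by simp
      finally show False using Ip by simp
    qed
  qed
  then have hi: "((\<lambda>p. r p * r p) has_integral 0) (cbox (0,0) (1,1))"
    unfolding I_def Q_cbox[symmetric]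
    using integrable_integral[OF integrable_Q[of "\<lambda>p. r p * r p"]] cr
    by (metis continuous_on_mult)
  show ?thesis
  proof
    fix p assume p: "p \<in> Q"
    have "r p * r p = 0"
      by (rule has_integral_0_cbox_imp_0[OF _ _ hi box_Q_ne]) 
         (use cr p in \<open>auto simp: Q_cbox intro!: continuous_intros\<close>)
    then show "r p = 0" by simp
  qed
qed

definition Eij :: "'n \<Rightarrow> 'n \<Rightarrow> real^'n^'n" where
  "Eij i j = (\<chi> a b. if a = i \<and> b = j then 1 else 0)"

lemma trace_Eij: "trace ((R::real^'n^'n) ** Eij i j) = R $ j $ i"
proof -
  have "\<And>ia. (\<Sum>k\<in>UNIV. if k = i \<and> ia = j then R $ j $ i else 0) = (if ia = j then R $ j $ i else 0)"
    by (cases "ia = j") auto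
  note * = this
  show ?thesis
    apply (simp add: trace_def matrix_matrix_mult_def Eij_def if_distrib cong: if_cong)
    apply (simp only: *)
    apply simp
    done
qed

lemma dens_matrix:
  fixes R :: "real \<times> real \<Rightarrow> real^'n^'n"
  assumes cR: "continuous_on Q R"
    and h: "\<And>\<phi> E. real_polynomial_function \<phi> \<Longrightarrow> integral Q (\<lambda>p. trace (R p ** (\<phi> p *\<^sub>R E))) = 0"
  shows "\<forall>p\<in>Q. R p = 0"
proof -
  have "\<forall>p\<in>Q. R p $ j $ i = 0" for i j
  proof (rule dens_scalar)
    show "continuous_on Q (\<lambda>p. R p $ j $ i)" using cR
      by (intro continuous_intros bounded_linear.continuous_on[OF bounded_linear_vec_nth]) 
    fix \<phi> :: "real \<times> real \<Rightarrow> real" assume "real_polynomial_function \<phi>"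
    from h[OF this, of "Eij i j"] show "integral Q (\<lambda>p. \<phi> p * R p $ j $ i) = 0"
      by (simp add: mm_simps tr_simps trace_Eij)
  qed
  then show ?thesis by (simp add: vec_eq_iff)
qed


definition qf :: "real^'n^'n \<Rightarrow> real^'n^'n \<Rightarrow> real^'n^'n \<Rightarrow> real" where
  "qf S a b = trace (S ** transpose a ** a) * trace (S ** transpose b ** b)
      - ((1/2) * trace (S ** (transpose a ** b + transpose b ** a)))^2"

lemma Jf_qf: "Jf S a b = sqrt (qf S a b)" by (simp add: Jf_def qf_def)

definition LI :: "real^'n^'n \<Rightarrow> real^'n^'n \<Rightarrow> real^'n^'n \<Rightarrow> real^'n^'n \<Rightarrow> real^'n^'n \<Rightarrow> real^'n^'n \<Rightarrow> real^'n^'n \<Rightarrow> real" where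
  "LI S a b Ss St Ps Pt = sqrt (qf S a b)
      + trace (Ss ** (Ps - S ** transpose a - a ** S))
      + trace (St ** (Pt - S ** transpose b - b ** S))"

definition dT :: "real^'n^'n \<Rightarrow> real^'n^'n \<Rightarrow> real^'n^'n \<Rightarrow> real^'n^'n \<Rightarrow> real" where
  "dT S a S1 a1 = trace ((S1 ** transpose a + S ** transpose a1) ** a + S ** transpose a ** a1)"

definition dTab :: "real^'n^'n \<Rightarrow> real^'n^'n \<Rightarrow> real^'n^'n \<Rightarrow> real^'n^'n \<Rightarrow> real^'n^'n \<Rightarrow> real^'n^'n \<Rightarrow> real" where
  "dTab S a b S1 a1 b1 = trace (S1 ** (transpose a ** b + transpose b ** a)
      + S ** (transpose a1 ** b + transpose a ** b1 + (transpose b1 ** a + transpose b ** a1)))"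

definition dq :: "real^'n^'n \<Rightarrow> real^'n^'n \<Rightarrow> real^'n^'n \<Rightarrow> real^'n^'n \<Rightarrow> real^'n^'n \<Rightarrow> real^'n^'n \<Rightarrow> real" where
  "dq S a b S1 a1 b1 = dT S a S1 a1 * trace (S ** transpose b ** b) + dT S b S1 b1 * trace (S ** transpose a ** a)
     - 2 * ((1/2) * dTab S a b S1 a1 b1) * ((1/2) * trace (S ** (transpose a ** b + transpose b ** a)))"

definition dLI where
  "dLI S a b Ss St Ps Pt S1 a1 b1 Ss1 St1 Ps1 Pt1 =
     inverse (sqrt (qf S a b)) / 2 * dq S a b S1 a1 b1
     + trace (Ss1 ** (Ps - S ** transpose a - a ** S) + Ss ** (Ps1 - (S1 ** transpose a + S ** transpose a1) - (a1 ** S + a ** S1)))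
     + trace (St1 ** (Pt - S ** transpose b - b ** S) + St ** (Pt1 - (S1 ** transpose b + S ** transpose b1) - (b1 ** S + b ** S1)))"

lemma vd_path: "((\<lambda>e. X + e *\<^sub>R (X1::'a::real_normed_vector)) has_vector_derivative X1) F"
  unfolding has_vector_derivative_def by (auto intro!: derivative_eq_intros)

lemma vdr: "(f has_vector_derivative (D::real)) F \<Longrightarrow> (f has_field_derivative D) F"
  by (simp add: has_real_derivative_iff_has_vector_derivative)

lemma LI_deriv:
  fixes S0 S1 a0 a1 b0 b1 Ss0 Ss1 St0 St1 Ps0 Ps1 Pt0 Pt1 :: "real^'n^'n"
  assumes q: "qf (S0 + x *\<^sub>R S1) (a0 + x *\<^sub>R a1) (b0 + x *\<^sub>R b1) > 0"
  shows "((\<lambda>e. LI (S0 + e *\<^sub>R S1) (a0 + e *\<^sub>R a1) (b0 + e *\<^sub>R b1) (Ss0 + e *\<^sub>R Ss1) (St0 + e *\<^sub>R St1)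
      (Ps0 + e *\<^sub>R Ps1) (Pt0 + e *\<^sub>R Pt1)) has_real_derivative
    dLI (S0 + x *\<^sub>R S1) (a0 + x *\<^sub>R a1) (b0 + x *\<^sub>R b1) (Ss0 + x *\<^sub>R Ss1) (St0 + x *\<^sub>R St1)
      (Ps0 + x *\<^sub>R Ps1) (Pt0 + x *\<^sub>R Pt1) S1 a1 b1 Ss1 St1 Ps1 Pt1) (at x within U)"
proof -
  note dS = vd_path[of S0 S1 "at x within U"]
  note da = vd_path[of a0 a1 "at x within U"]
  note db = vd_path[of b0 b1 "at x within U"]
  note dSs = vd_path[of Ss0 Ss1 "at x within U"]
  note dSt = vd_path[of St0 St1 "at x within U"]
  note dPs = vd_path[of Ps0 Ps1 "at x within U"]
  note dPt = vd_path[of Pt0 Pt1 "at x within U"]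
  note Taa = vdr[OF vd_tr[OF vd_mm[OF vd_mm[OF dS vd_tp[OF da]] da]]]
  note Tbb = vdr[OF vd_tr[OF vd_mm[OF vd_mm[OF dS vd_tp[OF db]] db]]]
  note Tab = vdr[OF vd_tr[OF vd_mm[OF dS has_vector_derivative_add[OF vd_mm[OF vd_tp[OF da] db] vd_mm[OF vd_tp[OF db] da]]]]]
  note qd = DERIV_diff[OF DERIV_mult[OF Taa Tbb] DERIV_power[OF DERIV_cmult[OF Tab, of "1/2"], of 2]]
  note Jd = DERIV_chain2[OF DERIV_real_sqrt[OF q[unfolded qf_def]] qd]
  note Ld = vdr[OF vd_tr[OF vd_mm[OF dSs has_vector_derivative_diff[OF has_vector_derivative_diff[OF dPs vd_mm[OF dS vd_tp[OF da]]] vd_mm[OF da dS]]]]]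
  note Lt = vdr[OF vd_tr[OF vd_mm[OF dSt has_vector_derivative_diff[OF has_vector_derivative_diff[OF dPt vd_mm[OF dS vd_tp[OF db]]] vd_mm[OF db dS]]]]]
  note all = DERIV_add[OF DERIV_add[OF Jd Ld] Lt]
  show ?thesis
    using all unfolding LI_def qf_def dLI_def dq_def dT_def dTab_def
    by (simp add: algebra_simps)
qed

lemma cont_snd: "continuous_on Q f \<Longrightarrow> continuous_on (U \<times> Q) (\<lambda>z. f (snd z))"
  by (rule continuous_on_compose2[OF _ continuous_on_snd[OF continuous_on_id]]) auto

lemma cont_fst: "continuous_on S (\<lambda>z::real \<times> 'a::topological_space. fst z)"
  by (rule continuous_on_fst[OF continuous_on_id])

lemma Q_ne: "Q \<noteq> {}" by (auto simp: Q_def)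

lemma master:
  fixes S0 S1 a0 a1 b0 b1 Ss0 Ss1 St0 St1 Ps0 Ps1 Pt0 Pt1 :: "real \<times> real \<Rightarrow> real^'n^'n"
  assumes c: "continuous_on Q S0" "continuous_on Q S1" "continuous_on Q a0" "continuous_on Q a1"
    "continuous_on Q b0" "continuous_on Q b1" "continuous_on Q Ss0" "continuous_on Q Ss1"
    "continuous_on Q St0" "continuous_on Q St1" "continuous_on Q Ps0" "continuous_on Q Ps1"
    "continuous_on Q Pt0" "continuous_on Q Pt1"
  and qpos: "\<And>p. p \<in> Q \<Longrightarrow> qf (S0 p) (a0 p) (b0 p) > 0"
  shows "((\<lambda>e. integral Q (\<lambda>p. LI (S0 p + e *\<^sub>R S1 p) (a0 p + e *\<^sub>R a1 p) (b0 p + e *\<^sub>R b1 p)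
            (Ss0 p + e *\<^sub>R Ss1 p) (St0 p + e *\<^sub>R St1 p) (Ps0 p + e *\<^sub>R Ps1 p) (Pt0 p + e *\<^sub>R Pt1 p)))
    has_real_derivative integral Q (\<lambda>p. dLI (S0 p) (a0 p) (b0 p) (Ss0 p) (St0 p) (Ps0 p) (Pt0 p)
            (S1 p) (a1 p) (b1 p) (Ss1 p) (St1 p) (Ps1 p) (Pt1 p))) (at 0)"
proof -
  note cs = cont_snd[OF c(1)] cont_snd[OF c(2)] cont_snd[OF c(3)] cont_snd[OF c(4)] cont_snd[OF c(5)]
     cont_snd[OF c(6)] cont_snd[OF c(7)] cont_snd[OF c(8)] cont_snd[OF c(9)] cont_snd[OF c(10)]
     cont_snd[OF c(11)] cont_snd[OF c(12)] cont_snd[OF c(13)] cont_snd[OF c(14)]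
  define K where "K = {-1..1::real} \<times> Q"
  define g where "g = (\<lambda>z::real \<times> (real\<times>real). qf (S0 (snd z) + fst z *\<^sub>R S1 (snd z))
      (a0 (snd z) + fst z *\<^sub>R a1 (snd z)) (b0 (snd z) + fst z *\<^sub>R b1 (snd z)))"
  have cg: "continuous_on K g" unfolding g_def qf_def K_def
    by (intro continuous_intros cs cont_fst)
  have ucg: "uniformly_continuous_on K g"
    by (rule compact_uniformly_continuous[OF cg]) (simp add: K_def compact_Times compact_Q)
  have cq0: "continuous_on Q (\<lambda>p. qf (S0 p) (a0 p) (b0 p))" unfolding qf_def
    by (intro continuous_intros c)
  obtain p0 where p0: "p0 \<in> Q" "\<forall>p\<in>Q. qf (S0 p0) (a0 p0) (b0 p0) \<le> qf (S0 p) (a0 p) (b0 p)"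
    using continuous_attains_inf[OF compact_Q Q_ne cq0] by blast
  define m where "m = qf (S0 p0) (a0 p0) (b0 p0)"
  have m0: "m > 0" unfolding m_def using qpos p0 by blast
  obtain d where d: "d > 0" "\<forall>x\<in>K. \<forall>x'\<in>K. dist x' x < d \<longrightarrow> dist (g x') (g x) < m"
    using ucg[unfolded uniformly_continuous_on_def] m0 by metis
  define \<delta> where "\<delta> = min 1 (d/2)"
  have \<delta>0: "\<delta> > 0" using d by (simp add: \<delta>_def)
  have qU: "qf (S0 p + e *\<^sub>R S1 p) (a0 p + e *\<^sub>R a1 p) (b0 p + e *\<^sub>R b1 p) > 0"
    if e: "e \<in> {-\<delta>..\<delta>}" and p: "p \<in> Q" for e p
  proof -
    have K1: "(e,p) \<in> K" "(0,p) \<in> K" using e p by (auto simp: K_def \<delta>_def)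
    have "dist (e,p) (0,p) = \<bar>e\<bar>" by (simp add: dist_Pair_Pair dist_real_def)
    also have "\<dots> < d" using e d by (auto simp: \<delta>_def)
    finally have "dist (g (e,p)) (g (0,p)) < m" using d(2) K1 by blast
    moreover have "g (0,p) \<ge> m" using p0 p by (simp add: g_def m_def)
    ultimately have "g (e,p) > 0" by (simp add: dist_real_def)
    then show ?thesis by (simp add: g_def)
  qed
  define F where "F = (\<lambda>e p. LI (S0 p + e *\<^sub>R S1 p) (a0 p + e *\<^sub>R a1 p) (b0 p + e *\<^sub>R b1 p)
            (Ss0 p + e *\<^sub>R Ss1 p) (St0 p + e *\<^sub>R St1 p) (Ps0 p + e *\<^sub>R Ps1 p) (Pt0 p + e *\<^sub>R Pt1 p))"
  define Fx where "Fx = (\<lambda>e p. dLI (S0 p + e *\<^sub>R S1 p) (a0 p + e *\<^sub>R a1 p) (b0 p + e *\<^sub>R b1 p)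
            (Ss0 p + e *\<^sub>R Ss1 p) (St0 p + e *\<^sub>R St1 p) (Ps0 p + e *\<^sub>R Ps1 p) (Pt0 p + e *\<^sub>R Pt1 p)
            (S1 p) (a1 p) (b1 p) (Ss1 p) (St1 p) (Ps1 p) (Pt1 p))"
  have L: "((\<lambda>e. integral (cbox (0,0) (1,1)) (F e)) has_field_derivative integral (cbox (0,0) (1,1)) (Fx 0))
     (at 0 within {-\<delta>..\<delta>})"
  proof (rule leibniz_rule_field_derivative)
    fix x t assume x: "x \<in> {-\<delta>..\<delta>}" and t: "t \<in> cbox (0::real,0::real) (1,1)"
    show "((\<lambda>x. F x t) has_field_derivative Fx x t) (at x within {-\<delta>..\<delta>})"
      unfolding F_def Fx_def by (rule LI_deriv[OF qU[OF x t[folded Q_cbox]]])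
  next
    fix x assume x: "x \<in> {-\<delta>..\<delta>}"
    show "F x integrable_on cbox (0,0) (1,1)"
      by (rule integrable_continuous) (unfold F_def LI_def qf_def Q_cbox[symmetric], intro continuous_intros c)
  next
    have cqU: "continuous_on ({-\<delta>..\<delta>} \<times> Q) (\<lambda>x. qf (S0 (snd x) + fst x *\<^sub>R S1 (snd x))
            (a0 (snd x) + fst x *\<^sub>R a1 (snd x)) (b0 (snd x) + fst x *\<^sub>R b1 (snd x)))"
      unfolding qf_def by (intro continuous_intros cs cont_fst)
    have "continuous_on ({-\<delta>..\<delta>} \<times> Q) (\<lambda>z. Fx (fst z) (snd z))"
      unfolding Fx_def dLI_def dq_def dT_def dTab_def
      apply (intro continuous_intros cs cont_fst cqU)
      apply (auto dest!: qU)
      done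
    then show "continuous_on ({-\<delta>..\<delta>} \<times> cbox (0,0) (1,1)) (\<lambda>(x, t). Fx x t)"
      by (simp add: case_prod_beta' Q_cbox)
  next
    show "0 \<in> {-\<delta>..\<delta>}" "convex {-\<delta>..\<delta>}" using \<delta>0 by auto
  qed
  have "at (0::real) within {-\<delta>..\<delta>} = at 0" by (rule at_within_interior) (use \<delta>0 in auto)
  with L have "((\<lambda>e. integral Q (F e)) has_field_derivative integral Q (Fx 0)) (at 0)"
    by (simp add: Q_cbox)
  then show ?thesis unfolding F_def Fx_def by simp
qed


lemma tr_cyc: "trace ((A::real^'n^'n) ** B ** C) = trace (B ** C ** A)"
  by (metis matrix_mul_assoc trace_mul_sym)
lemma tr_cyc2: "trace ((A::real^'n^'n) ** B ** C) = trace (C ** A ** B)"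
  by (metis matrix_mul_assoc trace_mul_sym)

lemma tr_sym1: fixes S D a :: "real^'n^'n" assumes "transpose S = S"
  shows "trace ((S::real^'n^'n) ** transpose D ** a) = trace (S ** transpose a ** D)"
proof -
  have "trace (S ** transpose D ** a) = trace (transpose (S ** transpose D ** a))" by (simp add: trace_transpose)
  also have "\<dots> = trace (transpose a ** D ** S)" using assms by (simp add: matrix_transpose_mul matrix_mul_assoc)
  also have "\<dots> = trace (S ** transpose a ** D)" by (rule tr_cyc2)
  finally show ?thesis .
qed

lemma tr_sym2: fixes S Ss D :: "real^'n^'n" assumes "transpose S = S" "transpose Ss = Ss"
  shows "trace ((Ss::real^'n^'n) ** S ** transpose D) = trace (S ** Ss ** D)"
proof -
  have "trace (Ss ** S ** transpose D) = trace (transpose (Ss ** S ** transpose D))" by (simp add: trace_transpose)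
  also have "\<dots> = trace (D ** S ** Ss)" using assms by (simp add: matrix_transpose_mul matrix_mul_assoc)
  also have "\<dots> = trace (S ** Ss ** D)" by (rule tr_cyc)
  finally show ?thesis .
qed

lemma tr_symX: fixes X A :: "real^'n^'n" assumes "transpose X = X" shows "trace (transpose (A::real^'n^'n) ** X) = trace (A ** X)"
proof -
  have "trace (transpose A ** X) = trace (transpose (transpose A ** X))" by (simp add: trace_transpose)
  also have "\<dots> = trace (X ** A)" using assms by (simp add: matrix_transpose_mul)
  also have "\<dots> = trace (A ** X)" by (rule trace_mul_sym)
  finally show ?thesis .
qed

section \<open>Symmetry of partial derivatives\<close>

lemma pd_s_sym: fixes F :: "real \<times> real \<Rightarrow> real^'n^'n" assumes F: "C1 F" and sym: "\<forall>p\<in>Q. transpose (F p) = F p" and p: "p \<in> Q"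
  shows "transpose (pd_s F p) = pd_s F p"
proof -
  have h: "((\<lambda>s. F (s, snd p)) has_vector_derivative pd_s F p) (at (fst p) within {0..1})"
    by (rule C1_vd_s[OF F p])
  have hT: "((\<lambda>s. transpose (F (s, snd p))) has_vector_derivative transpose (pd_s F p)) (at (fst p) within {0..1})"
    by (rule vd_tp[OF h])
  have "((\<lambda>s. F (s, snd p)) has_vector_derivative transpose (pd_s F p)) (at (fst p) within {0..1})"
  proof (rule has_vector_derivative_transform[OF Q_fst[OF p] _ hT])
    fix x :: real assume "x \<in> {0..1}"
    then show "F (x, snd p) = transpose (F (x, snd p))" using sym Q_memI_s[OF p] by auto
  qed
  then show ?thesis using pd_s_eqI[OF p] by metis
qed

lemma pd_t_sym: fixes F :: "real \<times> real \<Rightarrow> real^'n^'n" assumes F: "C1 F" and sym: "\<forall>p\<in>Q. transpose (F p) = F p" and p: "p \<in> Q"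
  shows "transpose (pd_t F p) = pd_t F p"
proof -
  have h: "((\<lambda>t. F (fst p, t)) has_vector_derivative pd_t F p) (at (snd p) within {0..1})"
    by (rule C1_vd_t[OF F p])
  have hT: "((\<lambda>t. transpose (F (fst p, t))) has_vector_derivative transpose (pd_t F p)) (at (snd p) within {0..1})"
    by (rule vd_tp[OF h])
  have "((\<lambda>t. F (fst p, t)) has_vector_derivative transpose (pd_t F p)) (at (snd p) within {0..1})"
  proof (rule has_vector_derivative_transform[OF Q_snd[OF p] _ hT])
    fix x :: real assume "x \<in> {0..1}"
    then show "F (fst p, x) = transpose (F (fst p, x))" using sym Q_memI_t[OF p] by auto
  qed
  then show ?thesis using pd_t_eqI[OF p] by metis
qed

lemma tr_symm_part: fixes X A :: "real^'n^'n" assumes "transpose X = X"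
  shows "trace ((1/2) *\<^sub>R (A + transpose A) ** (X::real^'n^'n)) = trace (A ** X)"
  using tr_symX[OF assms, of A] by (simp add: mm_simps tr_simps)

lemma part1:
  fixes Sg As At Ss St :: "real \<times> real \<Rightarrow> real^'n^'n"
  assumes Sg: "C1 Sg" and sym: "\<forall>p\<in>Q. transpose (Sg p) = Sg p"
  shows "Lag Sg As At Ss St = Lag Sg As At (symm_part Ss) (symm_part St)"
  unfolding Lag_def
proof (rule Henstock_Kurzweil_Integration.integral_cong)
  fix p assume p: "p \<in> Q"
  have X1: "transpose (pd_s Sg p - Sg p ** transpose (As p) - As p ** Sg p) = pd_s Sg p - Sg p ** transpose (As p) - As p ** Sg p"
    using pd_s_sym[OF Sg sym p] sym p by (simp add: tp_simps matrix_transpose_mul)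
  have X2: "transpose (pd_t Sg p - Sg p ** transpose (At p) - At p ** Sg p) = pd_t Sg p - Sg p ** transpose (At p) - At p ** Sg p"
    using pd_t_sym[OF Sg sym p] sym p by (simp add: tp_simps matrix_transpose_mul)
  show "Jf (Sg p) (As p) (At p) + trace (Ss p ** (pd_s Sg p - Sg p ** transpose (As p) - As p ** Sg p)) +
        trace (St p ** (pd_t Sg p - Sg p ** transpose (At p) - At p ** Sg p)) =
        Jf (Sg p) (As p) (At p) + trace (symm_part Ss p ** (pd_s Sg p - Sg p ** transpose (As p) - As p ** Sg p)) +
        trace (symm_part St p ** (pd_t Sg p - Sg p ** transpose (At p) - At p ** Sg p))"
    unfolding symm_part_def using tr_symm_part[OF X1, of "Ss p"] tr_symm_part[OF X2, of "St p"] by simp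
qed

lemma posdef_cancel: assumes "pos_def S" "(S::real^'n^'n) ** Y = 0" shows "Y = 0"
proof -
  have "Y *v x = 0" for x
  proof (rule ccontr)
    assume ne: "Y *v x \<noteq> 0"
    have "S *v (Y *v x) = 0" using assms(2) by (metis matrix_vector_mul_assoc matrix_vector_mult_0)
    then show False using assms(1) ne unfolding pos_def_def by (metis inner_zero_right less_irrefl)
  qed
  then show ?thesis by (simp add: matrix_eq)
qed

section \<open>Integration by parts\<close>

lemma ibp_s:
  fixes Ss D :: "real \<times> real \<Rightarrow> real^'n^'n"
  assumes cS: "C1 Ss" and cD: "C1 D" and bd: "\<And>p. p \<in> Q \<Longrightarrow> on_boundary p \<Longrightarrow> D p = 0"
  shows "integral Q (\<lambda>p. trace (Ss p ** pd_s D p)) = - integral Q (\<lambda>p. trace (pd_s Ss p ** D p))"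
proof -
  note cc = C1_cont[OF cS] C1_cont[OF cD]
  define h where "h = (\<lambda>p. trace (pd_s Ss p ** D p) + trace (Ss p ** pd_s D p))"
  have ch: "continuous_on Q h" unfolding h_def by (intro continuous_intros cc)
  have inner: "integral (cbox 0 1) (\<lambda>x. h (x, y)) = 0" if y: "y \<in> cbox 0 (1::real)" for y
  proof -
    have "((\<lambda>x. h (x, y)) has_integral (trace (Ss (1,y) ** D (1,y)) - trace (Ss (0,y) ** D (0,y)))) {0..1}"
    proof (rule fundamental_theorem_of_calculus[where f = "\<lambda>x. trace (Ss (x,y) ** D (x,y))"])
      fix x assume x: "x \<in> {0..1::real}"
      have xy: "(x,y) \<in> Q" using x y by (simp add: Q_def)
      have "((\<lambda>x. trace (Ss (x,y) ** D (x,y))) has_vector_derivative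
            trace (pd_s Ss (x,y) ** D (x,y) + Ss (x,y) ** pd_s D (x,y))) (at x within {0..1})"
        using vd_tr[OF vd_mm[OF C1_vd_s[OF cS xy] C1_vd_s[OF cD xy]]] by simp
      then show "((\<lambda>x. trace (Ss (x,y) ** D (x,y))) has_vector_derivative h (x,y)) (at x within {0..1})"
        by (simp add: h_def tr_simps)
    qed simp
    moreover have "D (1,y) = 0" "D (0,y) = 0" using bd y by (auto simp: Q_def on_boundary_def)
    ultimately show ?thesis by (simp add: cbox01) (blast intro: integral_unique)
  qed
  have "integral Q h = integral (cbox 0 1) (\<lambda>x. integral (cbox 0 1) (\<lambda>y. h (x, y)))"
    unfolding Q_cbox by (rule integral_prod_continuous) (use ch in \<open>simp add: Q_cbox\<close>)
  also have "\<dots> = integral (cbox 0 1) (\<lambda>y. integral (cbox 0 1) (\<lambda>x. h (x, y)))"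
    by (rule integral_swap_continuous) (use ch in \<open>simp add: Q_cbox case_prod_beta'\<close>)
  also have "\<dots> = integral (cbox 0 1) (\<lambda>y::real. 0::real)"
    by (rule Henstock_Kurzweil_Integration.integral_cong) (rule inner)
  finally have h0: "integral Q h = 0" by simp
  have "integral Q h = integral Q (\<lambda>p. trace (pd_s Ss p ** D p)) + integral Q (\<lambda>p. trace (Ss p ** pd_s D p))"
    unfolding h_def by (rule integral_add; rule integrable_Q) (intro continuous_intros cc)+
  with h0 show ?thesis by simp
qed

lemma ibp_t:
  fixes St D :: "real \<times> real \<Rightarrow> real^'n^'n"
  assumes cS: "C1 St" and cD: "C1 D" and bd: "\<And>p. p \<in> Q \<Longrightarrow> on_boundary p \<Longrightarrow> D p = 0"
  shows "integral Q (\<lambda>p. trace (St p ** pd_t D p)) = - integral Q (\<lambda>p. trace (pd_t St p ** D p))"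
proof -
  note cc = C1_cont[OF cS] C1_cont[OF cD]
  define h where "h = (\<lambda>p. trace (pd_t St p ** D p) + trace (St p ** pd_t D p))"
  have ch: "continuous_on Q h" unfolding h_def by (intro continuous_intros cc)
  have inner: "integral (cbox 0 1) (\<lambda>y. h (x, y)) = 0" if x: "x \<in> cbox 0 (1::real)" for x
  proof -
    have "((\<lambda>y. h (x, y)) has_integral (trace (St (x,1) ** D (x,1)) - trace (St (x,0) ** D (x,0)))) {0..1}"
    proof (rule fundamental_theorem_of_calculus[where f = "\<lambda>y. trace (St (x,y) ** D (x,y))"])
      fix y assume y: "y \<in> {0..1::real}"
      have xy: "(x,y) \<in> Q" using x y by (simp add: Q_def)
      have "((\<lambda>y. trace (St (x,y) ** D (x,y))) has_vector_derivative
            trace (pd_t St (x,y) ** D (x,y) + St (x,y) ** pd_t D (x,y))) (at y within {0..1})"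
        using vd_tr[OF vd_mm[OF C1_vd_t[OF cS xy] C1_vd_t[OF cD xy]]] by simp
      then show "((\<lambda>y. trace (St (x,y) ** D (x,y))) has_vector_derivative h (x,y)) (at y within {0..1})"
        by (simp add: h_def tr_simps)
    qed simp
    moreover have "D (x,1) = 0" "D (x,0) = 0" using bd x by (auto simp: Q_def on_boundary_def)
    ultimately show ?thesis by (simp add: cbox01) (blast intro: integral_unique)
  qed
  have "integral Q h = integral (cbox 0 1) (\<lambda>x. integral (cbox 0 1) (\<lambda>y. h (x, y)))"
    unfolding Q_cbox by (rule integral_prod_continuous) (use ch in \<open>simp add: Q_cbox\<close>)
  also have "\<dots> = integral (cbox 0 1) (\<lambda>x::real. 0::real)"
    by (rule Henstock_Kurzweil_Integration.integral_cong) (rule inner)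
  finally have h0: "integral Q h = 0" by simp
  have "integral Q h = integral Q (\<lambda>p. trace (pd_t St p ** D p)) + integral Q (\<lambda>p. trace (St p ** pd_t D p))"
    unfolding h_def by (rule integral_add; rule integrable_Q) (intro continuous_intros cc)+
  with h0 show ?thesis by simp
qed


lemma alg_Ss:
  fixes S a b Ss St Ps Pt D :: "real^'n^'n"
  shows "dLI S a b Ss St Ps Pt 0 0 0 D 0 0 0 = trace (D ** (Ps - S ** transpose a - a ** S))"
  by (simp add: dLI_def dq_def dT_def dTab_def mm_simps tr_simps tp_simps)

lemma alg_St:
  fixes S a b Ss St Ps Pt D :: "real^'n^'n"
  shows "dLI S a b Ss St Ps Pt 0 0 0 0 D 0 0 = trace (D ** (Pt - S ** transpose b - b ** S))"
  by (simp add: dLI_def dq_def dT_def dTab_def mm_simps tr_simps tp_simps)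

lemma alg_As:
  fixes S a b Ss St Ps Pt D :: "real^'n^'n"
  assumes sS: "transpose S = S" and sSs: "transpose Ss = Ss"
  shows "dLI S a b Ss St Ps Pt 0 D 0 0 0 0 0 =
    trace ((S ** (inverse (sqrt (qf S a b)) *\<^sub>R transpose (trace (S ** transpose b ** b) *\<^sub>R a
       - ((1/2) * trace (S ** (transpose a ** b + transpose b ** a))) *\<^sub>R b) - 2 *\<^sub>R Ss)) ** D)"
  using tr_sym1[OF sS, of D a] tr_sym1[OF sS, of D b] tr_sym2[OF sS sSs, of D] tr_cyc2[of Ss D S]
  by (simp add: dLI_def dq_def dT_def dTab_def mm_simps tr_simps tp_simps matrix_mul_assoc algebra_simps)

lemma alg_At:
  fixes S a b Ss St Ps Pt D :: "real^'n^'n"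
  assumes sS: "transpose S = S" and sSt: "transpose St = St"
  shows "dLI S a b Ss St Ps Pt 0 0 D 0 0 0 0 =
    trace ((S ** (inverse (sqrt (qf S a b)) *\<^sub>R transpose (trace (S ** transpose a ** a) *\<^sub>R b
       - ((1/2) * trace (S ** (transpose a ** b + transpose b ** a))) *\<^sub>R a) - 2 *\<^sub>R St)) ** D)"
  using tr_sym1[OF sS, of D a] tr_sym1[OF sS, of D b] tr_sym2[OF sS sSt, of D] tr_cyc2[of St D S]
  by (simp add: dLI_def dq_def dT_def dTab_def mm_simps tr_simps tp_simps matrix_mul_assoc algebra_simps)

lemma alg_Sg:
  fixes S a b Ss St Ps Pt D PD QD :: "real^'n^'n"
  shows "dLI S a b Ss St Ps Pt D 0 0 0 0 PD QD =
    trace ((((1/2) * inverse (sqrt (qf S a b))) *\<^sub>R (trace (S ** transpose b ** b) *\<^sub>R (transpose a ** a)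
        + trace (S ** transpose a ** a) *\<^sub>R (transpose b ** b)
        - ((1/2) * trace (S ** (transpose a ** b + transpose b ** a))) *\<^sub>R (transpose a ** b + transpose b ** a))
      - (transpose a ** Ss + Ss ** a) - (transpose b ** St + St ** b)) ** D)
    + trace (Ss ** PD) + trace (St ** QD)"
  using tr_cyc[of D "transpose a" a] tr_cyc[of D "transpose b" b] tr_cyc[of D "transpose a" b]
    tr_cyc[of D "transpose b" a] tr_cyc2[of Ss D "transpose a"] tr_cyc2[of St D "transpose b"]
  by (simp add: dLI_def dq_def dT_def dTab_def mm_simps tr_simps tp_simps matrix_mul_assoc algebra_simps)

lemma c0: "continuous_on Q (\<lambda>p. 0::real^'n^'n)" by simp

lemma var_Ss:
  fixes Sg As At Ss St D :: "real \<times> real \<Rightarrow> real^'n^'n"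
  assumes c: "continuous_on Q Sg" "continuous_on Q As" "continuous_on Q At" "continuous_on Q Ss"
     "continuous_on Q St" "continuous_on Q (pd_s Sg)" "continuous_on Q (pd_t Sg)"
    and cD: "continuous_on Q D" and q: "\<And>p. p \<in> Q \<Longrightarrow> qf (Sg p) (As p) (At p) > 0"
  shows "((\<lambda>e. Lag Sg As At (\<lambda>p. Ss p + e *\<^sub>R D p) St) has_real_derivative
     integral Q (\<lambda>p. trace (D p ** (pd_s Sg p - Sg p ** transpose (As p) - As p ** Sg p)))) (at 0)"
  using master[OF c(1) c0 c(2) c0 c(3) c0 c(4) cD c(5) c0 c(6) c0 c(7) c0 q]
  by (simp add: Lag_def LI_def Jf_qf alg_Ss)

lemma var_St:
  fixes Sg As At Ss St D :: "real \<times> real \<Rightarrow> real^'n^'n"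
  assumes c: "continuous_on Q Sg" "continuous_on Q As" "continuous_on Q At" "continuous_on Q Ss"
     "continuous_on Q St" "continuous_on Q (pd_s Sg)" "continuous_on Q (pd_t Sg)"
    and cD: "continuous_on Q D" and q: "\<And>p. p \<in> Q \<Longrightarrow> qf (Sg p) (As p) (At p) > 0"
  shows "((\<lambda>e. Lag Sg As At Ss (\<lambda>p. St p + e *\<^sub>R D p)) has_real_derivative
     integral Q (\<lambda>p. trace (D p ** (pd_t Sg p - Sg p ** transpose (At p) - At p ** Sg p)))) (at 0)"
  using master[OF c(1) c0 c(2) c0 c(3) c0 c(4) c0 c(5) cD c(6) c0 c(7) c0 q]
  by (simp add: Lag_def LI_def Jf_qf alg_St)

lemma var_As:
  fixes Sg As At Ss St D :: "real \<times> real \<Rightarrow> real^'n^'n"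
  assumes c: "continuous_on Q Sg" "continuous_on Q As" "continuous_on Q At" "continuous_on Q Ss"
     "continuous_on Q St" "continuous_on Q (pd_s Sg)" "continuous_on Q (pd_t Sg)"
    and cD: "continuous_on Q D" and q: "\<And>p. p \<in> Q \<Longrightarrow> qf (Sg p) (As p) (At p) > 0"
    and sym: "\<And>p. p \<in> Q \<Longrightarrow> transpose (Sg p) = Sg p" "\<And>p. p \<in> Q \<Longrightarrow> transpose (Ss p) = Ss p"
  shows "((\<lambda>e. Lag Sg (\<lambda>p. As p + e *\<^sub>R D p) At Ss St) has_real_derivative
     integral Q (\<lambda>p. trace ((Sg p ** (inverse (sqrt (qf (Sg p) (As p) (At p))) *\<^sub>R
        transpose (trace (Sg p ** transpose (At p) ** At p) *\<^sub>R As p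
       - ((1/2) * trace (Sg p ** (transpose (As p) ** At p + transpose (At p) ** As p))) *\<^sub>R At p) - 2 *\<^sub>R Ss p)) ** D p))) (at 0)"
proof -
  note m = master[OF c(1) c0 c(2) cD c(3) c0 c(4) c0 c(5) c0 c(6) c0 c(7) c0 q]
  have "integral Q (\<lambda>p. dLI (Sg p) (As p) (At p) (Ss p) (St p) (pd_s Sg p) (pd_t Sg p) 0 (D p) 0 0 0 0 0)
     = integral Q (\<lambda>p. trace ((Sg p ** (inverse (sqrt (qf (Sg p) (As p) (At p))) *\<^sub>R
        transpose (trace (Sg p ** transpose (At p) ** At p) *\<^sub>R As p
       - ((1/2) * trace (Sg p ** (transpose (As p) ** At p + transpose (At p) ** As p))) *\<^sub>R At p) - 2 *\<^sub>R Ss p)) ** D p))"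
    by (rule Henstock_Kurzweil_Integration.integral_cong) (rule alg_As[OF sym(1) sym(2)])
  with m show ?thesis by (simp add: Lag_def LI_def Jf_qf)
qed

lemma var_At:
  fixes Sg As At Ss St D :: "real \<times> real \<Rightarrow> real^'n^'n"
  assumes c: "continuous_on Q Sg" "continuous_on Q As" "continuous_on Q At" "continuous_on Q Ss"
     "continuous_on Q St" "continuous_on Q (pd_s Sg)" "continuous_on Q (pd_t Sg)"
    and cD: "continuous_on Q D" and q: "\<And>p. p \<in> Q \<Longrightarrow> qf (Sg p) (As p) (At p) > 0"
    and sym: "\<And>p. p \<in> Q \<Longrightarrow> transpose (Sg p) = Sg p" "\<And>p. p \<in> Q \<Longrightarrow> transpose (St p) = St p"
  shows "((\<lambda>e. Lag Sg As (\<lambda>p. At p + e *\<^sub>R D p) Ss St) has_real_derivative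
     integral Q (\<lambda>p. trace ((Sg p ** (inverse (sqrt (qf (Sg p) (As p) (At p))) *\<^sub>R
        transpose (trace (Sg p ** transpose (As p) ** As p) *\<^sub>R At p
       - ((1/2) * trace (Sg p ** (transpose (As p) ** At p + transpose (At p) ** As p))) *\<^sub>R As p) - 2 *\<^sub>R St p)) ** D p))) (at 0)"
proof -
  note m = master[OF c(1) c0 c(2) c0 c(3) cD c(4) c0 c(5) c0 c(6) c0 c(7) c0 q]
  have "integral Q (\<lambda>p. dLI (Sg p) (As p) (At p) (Ss p) (St p) (pd_s Sg p) (pd_t Sg p) 0 0 (D p) 0 0 0 0)
     = integral Q (\<lambda>p. trace ((Sg p ** (inverse (sqrt (qf (Sg p) (As p) (At p))) *\<^sub>R
        transpose (trace (Sg p ** transpose (As p) ** As p) *\<^sub>R At p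
       - ((1/2) * trace (Sg p ** (transpose (As p) ** At p + transpose (At p) ** As p))) *\<^sub>R As p) - 2 *\<^sub>R St p)) ** D p))"
    by (rule Henstock_Kurzweil_Integration.integral_cong) (rule alg_At[OF sym(1) sym(2)])
  with m show ?thesis by (simp add: Lag_def LI_def Jf_qf)
qed

definition Gm :: "real^'n^'n \<Rightarrow> real^'n^'n \<Rightarrow> real^'n^'n \<Rightarrow> real^'n^'n" where
  "Gm S a b = ((1/2) * inverse (sqrt (qf S a b))) *\<^sub>R (trace (S ** transpose b ** b) *\<^sub>R (transpose a ** a)
        + trace (S ** transpose a ** a) *\<^sub>R (transpose b ** b)
        - ((1/2) * trace (S ** (transpose a ** b + transpose b ** a))) *\<^sub>R (transpose a ** b + transpose b ** a))"

lemma var_Sg: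
  fixes Sg As At Ss St D :: "real \<times> real \<Rightarrow> real^'n^'n"
  assumes Sg: "C1 Sg" and c: "continuous_on Q As" "continuous_on Q At"
    and Ss: "C1 Ss" and St: "C1 St"
    and D: "C1 D" and bd: "\<And>p. p \<in> Q \<Longrightarrow> on_boundary p \<Longrightarrow> D p = 0"
    and q: "\<And>p. p \<in> Q \<Longrightarrow> qf (Sg p) (As p) (At p) > 0"
  shows "((\<lambda>e. Lag (\<lambda>p. Sg p + e *\<^sub>R D p) As At Ss St) has_real_derivative
     integral Q (\<lambda>p. trace ((Gm (Sg p) (As p) (At p) - (transpose (As p) ** Ss p + Ss p ** As p)
        - (transpose (At p) ** St p + St p ** At p) - pd_s Ss p - pd_t St p) ** D p))) (at 0)"
proof -
  note cS = C1_cont[OF Sg] and cSs = C1_cont[OF Ss] and cSt = C1_cont[OF St] and cD = C1_cont[OF D]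
  note m = master[OF cS(1) cD(1) c(1) c0 c(2) c0 cSs(1) c0 cSt(1) c0 cS(2) cD(2) cS(3) cD(3) q]
  have pds: "pd_s (\<lambda>p. Sg p + e *\<^sub>R D p) p = pd_s Sg p + e *\<^sub>R pd_s D p" if p: "p \<in> Q" for e p
  proof (rule pd_s_eqI[OF p])
    show "((\<lambda>s. Sg (s, snd p) + e *\<^sub>R D (s, snd p)) has_vector_derivative pd_s Sg p + e *\<^sub>R pd_s D p)
        (at (fst p) within {0..1})"
      using has_vector_derivative_add[OF C1_vd_s[OF Sg p] has_vector_derivative_scaleR[OF DERIV_const[of e] C1_vd_s[OF D p]]]
      by simp
  qed
  have pdt: "pd_t (\<lambda>p. Sg p + e *\<^sub>R D p) p = pd_t Sg p + e *\<^sub>R pd_t D p" if p: "p \<in> Q" for e p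
  proof (rule pd_t_eqI[OF p])
    show "((\<lambda>t. Sg (fst p, t) + e *\<^sub>R D (fst p, t)) has_vector_derivative pd_t Sg p + e *\<^sub>R pd_t D p)
        (at (snd p) within {0..1})"
      using has_vector_derivative_add[OF C1_vd_t[OF Sg p] has_vector_derivative_scaleR[OF DERIV_const[of e] C1_vd_t[OF D p]]]
      by simp
  qed
  have feq: "(\<lambda>e. Lag (\<lambda>p. Sg p + e *\<^sub>R D p) As At Ss St) = (\<lambda>e. integral Q (\<lambda>p. LI (Sg p + e *\<^sub>R D p) (As p + e *\<^sub>R 0)
      (At p + e *\<^sub>R 0) (Ss p + e *\<^sub>R 0) (St p + e *\<^sub>R 0) (pd_s Sg p + e *\<^sub>R pd_s D p) (pd_t Sg p + e *\<^sub>R pd_t D p)))"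
  proof
    fix e
    show "Lag (\<lambda>p. Sg p + e *\<^sub>R D p) As At Ss St = integral Q (\<lambda>p. LI (Sg p + e *\<^sub>R D p) (As p + e *\<^sub>R 0)
      (At p + e *\<^sub>R 0) (Ss p + e *\<^sub>R 0) (St p + e *\<^sub>R 0) (pd_s Sg p + e *\<^sub>R pd_s D p) (pd_t Sg p + e *\<^sub>R pd_t D p))"
      unfolding Lag_def
      by (rule Henstock_Kurzweil_Integration.integral_cong) (simp add: LI_def Jf_qf pds pdt)
  qed
  define K where "K = (\<lambda>p. Gm (Sg p) (As p) (At p) - (transpose (As p) ** Ss p + Ss p ** As p)
        - (transpose (At p) ** St p + St p ** At p))"
  have cq: "continuous_on Q (\<lambda>p. qf (Sg p) (As p) (At p))" unfolding qf_def
    by (intro continuous_intros cS c)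
  have cK: "continuous_on Q K" unfolding K_def Gm_def
    apply (intro continuous_intros cS c cSs cSt cq)
    using q by auto (metis less_irrefl)
  have "integral Q (\<lambda>p. dLI (Sg p) (As p) (At p) (Ss p) (St p) (pd_s Sg p) (pd_t Sg p) (D p) 0 0 0 0 (pd_s D p) (pd_t D p))
      = integral Q (\<lambda>p. trace (K p ** D p) + trace (Ss p ** pd_s D p) + trace (St p ** pd_t D p))"
    by (rule Henstock_Kurzweil_Integration.integral_cong) (simp add: alg_Sg K_def Gm_def)
  also have "\<dots> = integral Q (\<lambda>p. trace (K p ** D p)) + integral Q (\<lambda>p. trace (Ss p ** pd_s D p))
      + integral Q (\<lambda>p. trace (St p ** pd_t D p))"
    by (subst integral_add; (rule integrable_Q; intro continuous_intros cK cSs cSt cD)?)+ simp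
  also have "\<dots> = integral Q (\<lambda>p. trace (K p ** D p)) - integral Q (\<lambda>p. trace (pd_s Ss p ** D p))
      - integral Q (\<lambda>p. trace (pd_t St p ** D p))"
    using ibp_s[OF Ss D bd] ibp_t[OF St D bd] by simp
  also have "\<dots> = integral Q (\<lambda>p. trace ((K p - pd_s Ss p - pd_t St p) ** D p))"
    by (subst integral_diff[symmetric]; (rule integrable_Q; intro continuous_intros cK cSs cSt cD)?)+
       (simp add: mm_simps tr_simps)
  finally have v: "integral Q (\<lambda>p. dLI (Sg p) (As p) (At p) (Ss p) (St p) (pd_s Sg p) (pd_t Sg p) (D p) 0 0 0 0 (pd_s D p) (pd_t D p))
      = integral Q (\<lambda>p. trace ((K p - pd_s Ss p - pd_t St p) ** D p))" .
  show ?thesis using m unfolding feq v by (simp add: K_def)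
qed


lemma int0: assumes "\<And>p. p \<in> Q \<Longrightarrow> f p = (0::'a::banach)" shows "integral Q f = 0"
proof -
  have "integral Q f = integral Q (\<lambda>p. 0::'a)"
    by (rule Henstock_Kurzweil_Integration.integral_cong) (rule assms)
  then show ?thesis by simp
qed

lemma tr_E: "trace ((R::real^'n^'n) ** (c *\<^sub>R (E + transpose E))) = c * trace ((R + transpose R) ** E)"
proof -
  have "trace (R ** transpose E) = trace (transpose (R ** transpose E))" by (simp add: trace_transpose)
  also have "\<dots> = trace (E ** transpose R)" by (simp add: matrix_transpose_mul)
  also have "\<dots> = trace (transpose R ** E)" by (rule trace_mul_sym)
  finally have *: "trace (R ** transpose E) = trace (transpose R ** E)" .
  show ?thesis by (simp add: mm_simps tr_simps * algebra_simps)
qed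

lemma tr_TE: "trace ((R::real^'n^'n) ** transpose E) = trace (transpose R ** E)"
  using tr_E[of R 1 E] by (simp add: mm_simps tr_simps)

definition wfun :: "real \<times> real \<Rightarrow> real" where
  "wfun p = fst p * (1 - fst p) * (snd p * (1 - snd p))"

lemma wfun_poly: "real_polynomial_function wfun"
proof -
  have f: "real_polynomial_function (\<lambda>p::real\<times>real. fst p)" by (rule real_polynomial_function.intros(1)[OF bounded_linear_fst])
  have s: "real_polynomial_function (\<lambda>p::real\<times>real. snd p)" by (rule real_polynomial_function.intros(1)[OF bounded_linear_snd])
  show ?thesis unfolding wfun_def using f s by (intro real_polynomial_function.intros(4) real_polynomial_function_diff real_polynomial_function.intros(2))
qed

lemma wfun_bd: "on_boundary p \<Longrightarrow> wfun p = 0" by (auto simp: wfun_def on_boundary_def)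

lemma wfun_pos: assumes "p \<in> box (0,0) (1,1)" shows "wfun p > 0"
proof -
  have "(1::real,0::real) \<in> Basis" "(0::real,1::real) \<in> Basis" by (auto simp: Basis_prod_def)
  then have "0 < fst p" "fst p < 1" "0 < snd p" "snd p < 1" using assms unfolding mem_box
    by (cases p; force simp: inner_Pair)+
  then show ?thesis by (simp add: wfun_def)
qed

lemma cont_wfun: "continuous_on S wfun" unfolding wfun_def by (intro continuous_intros)

lemma dens_sym:
  fixes R :: "real \<times> real \<Rightarrow> real^'n^'n"
  assumes cR: "continuous_on Q R"
    and h: "\<And>\<phi> E. real_polynomial_function \<phi> \<Longrightarrow> integral Q (\<lambda>p. trace (R p ** ((wfun p * \<phi> p) *\<^sub>R (E + transpose E)))) = 0"
  shows "\<forall>p\<in>Q. R p + transpose (R p) = 0"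
proof -
  have w0: "\<forall>p\<in>Q. wfun p *\<^sub>R (R p + transpose (R p)) = 0"
  proof (rule dens_matrix)
    show "continuous_on Q (\<lambda>p. wfun p *\<^sub>R (R p + transpose (R p)))" by (intro continuous_intros cR cont_wfun)
    fix \<phi> :: "real \<times> real \<Rightarrow> real" and E :: "real^'n^'n" assume \<phi>: "real_polynomial_function \<phi>"
    have "\<And>p. trace ((wfun p *\<^sub>R (R p + transpose (R p))) ** (\<phi> p *\<^sub>R E)) = trace (R p ** ((wfun p * \<phi> p) *\<^sub>R (E + transpose E)))"
      by (simp add: tr_E tr_TE mm_simps tr_simps algebra_simps)
    then show "integral Q (\<lambda>p. trace ((wfun p *\<^sub>R (R p + transpose (R p))) ** (\<phi> p *\<^sub>R E))) = 0"
      using h[OF \<phi>, of E] by simp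
  qed
  have bx: "R p + transpose (R p) = 0" if p: "p \<in> box (0,0) (1,1)" for p
  proof -
    have "p \<in> Q" using p box_subset_cbox Q_cbox by blast
    then show ?thesis using w0 wfun_pos[OF p] by auto
  qed
  show ?thesis
  proof
    fix p assume p: "p \<in> Q"
    show "R p + transpose (R p) = 0"
    proof (rule continuous_constant_on_closure[of "box (0,0) (1,1)"])
      show "continuous_on (closure (box (0::real,0::real) (1,1))) (\<lambda>p. R p + transpose (R p))"
        using box_Q_ne by (simp add: Q_cbox[symmetric]) (intro continuous_intros cR)
      show "\<And>x. x \<in> box (0,0) (1,1) \<Longrightarrow> R x + transpose (R x) = 0" by (rule bx)
      show "p \<in> closure (box (0,0) (1,1))" using p box_Q_ne by (simp add: Q_cbox)
    qed
  qed
qed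

lemma A5:
  fixes Ss St a b :: "real^'n^'n"
  assumes e1: "c *\<^sub>R (x *\<^sub>R a - k *\<^sub>R b) = 2 *\<^sub>R Ss" and e2: "c *\<^sub>R (y *\<^sub>R b - k *\<^sub>R a) = 2 *\<^sub>R St"
    and s1: "transpose Ss = Ss" and s2: "transpose St = St"
  shows "transpose a ** Ss + Ss ** a + (transpose b ** St + St ** b) =
     2 *\<^sub>R (((1/2) * c) *\<^sub>R (x *\<^sub>R (transpose a ** a) + y *\<^sub>R (transpose b ** b) - k *\<^sub>R (transpose a ** b + transpose b ** a)))"
proof -
  have S1: "Ss = (c/2) *\<^sub>R (x *\<^sub>R a - k *\<^sub>R b)"
  proof -
    have "Ss = (1/2) *\<^sub>R (2 *\<^sub>R Ss)" by simp
    also have "\<dots> = (c/2) *\<^sub>R (x *\<^sub>R a - k *\<^sub>R b)" by (simp add: e1[symmetric])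
    finally show ?thesis .
  qed
  have S2: "St = (c/2) *\<^sub>R (y *\<^sub>R b - k *\<^sub>R a)"
  proof -
    have "St = (1/2) *\<^sub>R (2 *\<^sub>R St)" by simp
    also have "\<dots> = (c/2) *\<^sub>R (y *\<^sub>R b - k *\<^sub>R a)" by (simp add: e2[symmetric])
    finally show ?thesis .
  qed
  have S1T: "Ss = (c/2) *\<^sub>R (x *\<^sub>R transpose a - k *\<^sub>R transpose b)"
    using arg_cong[OF S1, of transpose] s1 by (simp add: tp_simps)
  have S2T: "St = (c/2) *\<^sub>R (y *\<^sub>R transpose b - k *\<^sub>R transpose a)"
    using arg_cong[OF S2, of transpose] s2 by (simp add: tp_simps)
  have t1: "transpose a ** Ss = (c/2) *\<^sub>R (x *\<^sub>R (transpose a ** a) - k *\<^sub>R (transpose a ** b))"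
    by (subst S1) (simp add: mm_simps)
  have t2: "Ss ** a = (c/2) *\<^sub>R (x *\<^sub>R (transpose a ** a) - k *\<^sub>R (transpose b ** a))"
    by (subst S1T) (simp add: mm_simps)
  have t3: "transpose b ** St = (c/2) *\<^sub>R (y *\<^sub>R (transpose b ** b) - k *\<^sub>R (transpose b ** a))"
    by (subst S2) (simp add: mm_simps)
  have t4: "St ** b = (c/2) *\<^sub>R (y *\<^sub>R (transpose b ** b) - k *\<^sub>R (transpose a ** b))"
    by (subst S2T) (simp add: mm_simps)
  show ?thesis unfolding t1 t2 t3 t4 by (simp add: vec_eq_iff algebra_simps)
qed

lemma Gm_sym: "transpose (Gm S a b) = Gm (S::real^'n^'n) a b"
  by (simp add: Gm_def tp_simps matrix_transpose_mul add.commute)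


theorem mainTheorem7:
  fixes Sg As At Ss St :: "real \<times> real \<Rightarrow> real^'n::finite^'n"
  assumes "C2 Sg" and "C2 As" and "C2 At"
    and "\<forall>p\<in>Q. pos_def (Sg p)"
    and "\<forall>p\<in>Q. Jf (Sg p) (As p) (At p) > 0"
    and "C1 Ss" and "C1 St"
  shows "Lag Sg As At Ss St = Lag Sg As At (symm_part Ss) (symm_part St)
    \<and> ((\<forall>p\<in>Q. transpose (Ss p) = Ss p \<and> transpose (St p) = St p) \<longrightarrow>
        (critical Sg As At Ss St \<longleftrightarrow> cp_system Sg As At Ss St))"
proof -
  note a = assms
  have Sg1: "C1 Sg" using a(1) by (rule C2_C1)
  note cSg = C1_cont[OF Sg1] and cAs = C1_cont[OF C2_C1[OF a(2)]] and cAt = C1_cont[OF C2_C1[OF a(3)]]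
    and cSs = C1_cont[OF a(6)] and cSt = C1_cont[OF a(7)]
  have symSg: "\<And>p. p \<in> Q \<Longrightarrow> transpose (Sg p) = Sg p" using a(4) by (simp add: pos_def_def)
  have q: "\<And>p. p \<in> Q \<Longrightarrow> qf (Sg p) (As p) (At p) > 0" using a(5) by (simp add: Jf_qf)
  have P1: "Lag Sg As At Ss St = Lag Sg As At (symm_part Ss) (symm_part St)"
    using part1[OF Sg1] symSg by blast
  have P2: "critical Sg As At Ss St \<longleftrightarrow> cp_system Sg As At Ss St"
    if sym: "\<forall>p\<in>Q. transpose (Ss p) = Ss p \<and> transpose (St p) = St p"
  proof -
    have sSs: "\<And>p. p \<in> Q \<Longrightarrow> transpose (Ss p) = Ss p" and sSt: "\<And>p. p \<in> Q \<Longrightarrow> transpose (St p) = St p"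
      using sym by auto
    define Xs where "Xs = (\<lambda>p. pd_s Sg p - Sg p ** transpose (As p) - As p ** Sg p)"
    define Xt where "Xt = (\<lambda>p. pd_t Sg p - Sg p ** transpose (At p) - At p ** Sg p)"
    define cc where "cc = (\<lambda>p. inverse (sqrt (qf (Sg p) (As p) (At p))))"
    define Na where "Na = (\<lambda>p. trace (Sg p ** transpose (At p) ** At p) *\<^sub>R As p
       - ((1/2) * trace (Sg p ** (transpose (As p) ** At p + transpose (At p) ** As p))) *\<^sub>R At p)"
    define Nb where "Nb = (\<lambda>p. trace (Sg p ** transpose (As p) ** As p) *\<^sub>R At p
       - ((1/2) * trace (Sg p ** (transpose (As p) ** At p + transpose (At p) ** As p))) *\<^sub>R As p)"
    define Ra where "Ra = (\<lambda>p. Sg p ** (cc p *\<^sub>R transpose (Na p) - 2 *\<^sub>R Ss p))"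
    define Rb where "Rb = (\<lambda>p. Sg p ** (cc p *\<^sub>R transpose (Nb p) - 2 *\<^sub>R St p))"
    define Rp where "Rp = (\<lambda>p. Gm (Sg p) (As p) (At p) - (transpose (As p) ** Ss p + Ss p ** As p)
        - (transpose (At p) ** St p + St p ** At p) - pd_s Ss p - pd_t St p)"
    define Z where "Z = (\<lambda>p. pd_s Ss p + pd_t St p + Gm (Sg p) (As p) (At p))"
    have cq: "continuous_on Q (\<lambda>p. qf (Sg p) (As p) (At p))" unfolding qf_def
      by (intro continuous_intros cSg cAs cAt)
    have ccc: "continuous_on Q cc" unfolding cc_def
      apply (intro continuous_intros cq)
      using q by auto (metis less_irrefl)
    have dSs: "((\<lambda>e. Lag Sg As At (\<lambda>p. Ss p + e *\<^sub>R D p) St) has_real_derivative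
        integral Q (\<lambda>p. trace (D p ** Xs p))) (at 0)" if "C1 D" for D
      using var_Ss[OF cSg(1) cAs(1) cAt(1) cSs(1) cSt(1) cSg(2) cSg(3) C1_cont(1)[OF that] q]
      by (simp add: Xs_def)
    have dSt: "((\<lambda>e. Lag Sg As At Ss (\<lambda>p. St p + e *\<^sub>R D p)) has_real_derivative
        integral Q (\<lambda>p. trace (D p ** Xt p))) (at 0)" if "C1 D" for D
      using var_St[OF cSg(1) cAs(1) cAt(1) cSs(1) cSt(1) cSg(2) cSg(3) C1_cont(1)[OF that] q]
      by (simp add: Xt_def)
    have dAs: "((\<lambda>e. Lag Sg (\<lambda>p. As p + e *\<^sub>R D p) At Ss St) has_real_derivative
        integral Q (\<lambda>p. trace (Ra p ** D p))) (at 0)" if "C2 D" for D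
      using var_As[OF cSg(1) cAs(1) cAt(1) cSs(1) cSt(1) cSg(2) cSg(3) C1_cont(1)[OF C2_C1[OF that]] q symSg sSs]
      by (simp add: Ra_def Na_def cc_def)
    have dAt: "((\<lambda>e. Lag Sg As (\<lambda>p. At p + e *\<^sub>R D p) Ss St) has_real_derivative
        integral Q (\<lambda>p. trace (Rb p ** D p))) (at 0)" if "C2 D" for D
      using var_At[OF cSg(1) cAs(1) cAt(1) cSs(1) cSt(1) cSg(2) cSg(3) C1_cont(1)[OF C2_C1[OF that]] q symSg sSt]
      by (simp add: Rb_def Nb_def cc_def)
    have dSg: "((\<lambda>e. Lag (\<lambda>p. Sg p + e *\<^sub>R D p) As At Ss St) has_real_derivative
        integral Q (\<lambda>p. trace (Rp p ** D p))) (at 0)" if "adm_Sigma_var D" for D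
    proof -
      have D: "C1 D" and bd: "\<And>p. p \<in> Q \<Longrightarrow> on_boundary p \<Longrightarrow> D p = 0"
        using that by (auto simp: adm_Sigma_var_def C2_def)
      show ?thesis using var_Sg[OF Sg1 cAs(1) cAt(1) a(6) a(7) D bd q] by (simp add: Rp_def)
    qed
    have Rp_Z: "Rp p = - Z p" if p: "p \<in> Q" and e1: "cc p *\<^sub>R Na p = 2 *\<^sub>R Ss p" and e2: "cc p *\<^sub>R Nb p = 2 *\<^sub>R St p" for p
    proof -
      have K: "transpose (As p) ** Ss p + Ss p ** As p + (transpose (At p) ** St p + St p ** At p) = 2 *\<^sub>R Gm (Sg p) (As p) (At p)"
        using A5[OF e1[unfolded Na_def] e2[unfolded Nb_def] sSs[OF p] sSt[OF p]]
        by (simp add: Gm_def cc_def)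
      have "Rp p = Gm (Sg p) (As p) (At p) - (transpose (As p) ** Ss p + Ss p ** As p + (transpose (At p) ** St p + St p ** At p))
          - pd_s Ss p - pd_t St p" by (simp add: Rp_def algebra_simps)
      also have "\<dots> = Gm (Sg p) (As p) (At p) - 2 *\<^sub>R Gm (Sg p) (As p) (At p) - pd_s Ss p - pd_t St p" by (simp only: K)
      also have "\<dots> = - Z p" by (simp add: Z_def scaleR_2 algebra_simps)
      finally show ?thesis .
    qed
    have ZT: "transpose (Z p) = Z p" if p: "p \<in> Q" for p
      using pd_s_sym[OF a(6) _ p] pd_t_sym[OF a(7) _ p] sSs sSt Gm_sym
      by (simp add: Z_def tp_simps)
    have Ra_eq: "Ra p = 0 \<longleftrightarrow> cc p *\<^sub>R Na p = 2 *\<^sub>R Ss p" if p: "p \<in> Q" for p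
    proof
      assume "Ra p = 0"
      then have "cc p *\<^sub>R transpose (Na p) - 2 *\<^sub>R Ss p = 0"
        using posdef_cancel a(4) p unfolding Ra_def by blast
      then have "transpose (cc p *\<^sub>R transpose (Na p) - 2 *\<^sub>R Ss p) = 0" by (simp add: tp_simps)
      then show "cc p *\<^sub>R Na p = 2 *\<^sub>R Ss p" using sSs[OF p] by (simp add: tp_simps)
    next
      assume "cc p *\<^sub>R Na p = 2 *\<^sub>R Ss p"
      then have "transpose (cc p *\<^sub>R Na p) = transpose (2 *\<^sub>R Ss p)" by simp
      then have "cc p *\<^sub>R transpose (Na p) = 2 *\<^sub>R Ss p" using sSs[OF p] by (simp add: tp_simps)
      then show "Ra p = 0" by (simp add: Ra_def)
    qed
    have Rb_eq: "Rb p = 0 \<longleftrightarrow> cc p *\<^sub>R Nb p = 2 *\<^sub>R St p" if p: "p \<in> Q" for p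
    proof
      assume "Rb p = 0"
      then have "cc p *\<^sub>R transpose (Nb p) - 2 *\<^sub>R St p = 0"
        using posdef_cancel a(4) p unfolding Rb_def by blast
      then have "transpose (cc p *\<^sub>R transpose (Nb p) - 2 *\<^sub>R St p) = 0" by (simp add: tp_simps)
      then show "cc p *\<^sub>R Nb p = 2 *\<^sub>R St p" using sSt[OF p] by (simp add: tp_simps)
    next
      assume "cc p *\<^sub>R Nb p = 2 *\<^sub>R St p"
      then have "transpose (cc p *\<^sub>R Nb p) = transpose (2 *\<^sub>R St p)" by simp
      then have "cc p *\<^sub>R transpose (Nb p) = 2 *\<^sub>R St p" using sSt[OF p] by (simp add: tp_simps)
      then show "Rb p = 0" by (simp add: Rb_def)
    qed
    have cp_iff: "cp_system Sg As At Ss St \<longleftrightarrow>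
       (\<forall>p\<in>Q. cc p *\<^sub>R Na p = 2 *\<^sub>R Ss p \<and> cc p *\<^sub>R Nb p = 2 *\<^sub>R St p \<and> Z p = 0 \<and> Xs p = 0 \<and> Xt p = 0)"
      unfolding cp_system_def Let_def
      by (simp add: Jf_qf cc_def Na_def Nb_def Z_def Gm_def Xs_def Xt_def diff_diff_eq)
    show ?thesis
    proof
      assume cr: "critical Sg As At Ss St"
      have crSg: "\<And>D. adm_Sigma_var D \<Longrightarrow> ((\<lambda>e. Lag (\<lambda>p. Sg p + e *\<^sub>R D p) As At Ss St) has_real_derivative 0) (at 0)"
        and crAs: "\<And>D. C2 D \<Longrightarrow> ((\<lambda>e. Lag Sg (\<lambda>p. As p + e *\<^sub>R D p) At Ss St) has_real_derivative 0) (at 0)"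
        and crAt: "\<And>D. C2 D \<Longrightarrow> ((\<lambda>e. Lag Sg As (\<lambda>p. At p + e *\<^sub>R D p) Ss St) has_real_derivative 0) (at 0)"
        and crSs: "\<And>D. C1 D \<Longrightarrow> ((\<lambda>e. Lag Sg As At (\<lambda>p. Ss p + e *\<^sub>R D p) St) has_real_derivative 0) (at 0)"
        and crSt: "\<And>D. C1 D \<Longrightarrow> ((\<lambda>e. Lag Sg As At Ss (\<lambda>p. St p + e *\<^sub>R D p)) has_real_derivative 0) (at 0)"
        using cr unfolding critical_def by blast+
      have Xs0: "\<forall>p\<in>Q. Xs p = 0"
      proof (rule dens_matrix)
        show "continuous_on Q Xs" unfolding Xs_def by (intro continuous_intros cSg cAs)
        fix \<phi> :: "real \<times> real \<Rightarrow> real" and E :: "real^'n^'n" assume \<phi>: "real_polynomial_function \<phi>"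
        have C: "C1 (\<lambda>p. \<phi> p *\<^sub>R E)" by (rule C1_poly(1)[OF \<phi>])
        have "integral Q (\<lambda>p. trace ((\<phi> p *\<^sub>R E) ** Xs p)) = 0" using DERIV_unique[OF dSs[OF C] crSs[OF C]] .
        moreover have "\<And>p. trace (Xs p ** (\<phi> p *\<^sub>R E)) = trace ((\<phi> p *\<^sub>R E) ** Xs p)" by (rule trace_mul_sym)
        ultimately show "integral Q (\<lambda>p. trace (Xs p ** (\<phi> p *\<^sub>R E))) = 0" by simp
      qed
      have Xt0: "\<forall>p\<in>Q. Xt p = 0"
      proof (rule dens_matrix)
        show "continuous_on Q Xt" unfolding Xt_def by (intro continuous_intros cSg cAt)
        fix \<phi> :: "real \<times> real \<Rightarrow> real" and E :: "real^'n^'n" assume \<phi>: "real_polynomial_function \<phi>"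
        have C: "C1 (\<lambda>p. \<phi> p *\<^sub>R E)" by (rule C1_poly(1)[OF \<phi>])
        have "integral Q (\<lambda>p. trace ((\<phi> p *\<^sub>R E) ** Xt p)) = 0" using DERIV_unique[OF dSt[OF C] crSt[OF C]] .
        moreover have "\<And>p. trace (Xt p ** (\<phi> p *\<^sub>R E)) = trace ((\<phi> p *\<^sub>R E) ** Xt p)" by (rule trace_mul_sym)
        ultimately show "integral Q (\<lambda>p. trace (Xt p ** (\<phi> p *\<^sub>R E))) = 0" by simp
      qed
      have Ra0: "\<forall>p\<in>Q. Ra p = 0"
      proof (rule dens_matrix)
        show "continuous_on Q Ra" unfolding Ra_def Na_def by (intro continuous_intros cSg cAs cAt cSs ccc)
        fix \<phi> :: "real \<times> real \<Rightarrow> real" and E :: "real^'n^'n" assume \<phi>: "real_polynomial_function \<phi>"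
        have C: "C2 (\<lambda>p. \<phi> p *\<^sub>R E)" by (rule C2_poly[OF \<phi>])
        show "integral Q (\<lambda>p. trace (Ra p ** (\<phi> p *\<^sub>R E))) = 0" using DERIV_unique[OF dAs[OF C] crAs[OF C]] .
      qed
      have Rb0: "\<forall>p\<in>Q. Rb p = 0"
      proof (rule dens_matrix)
        show "continuous_on Q Rb" unfolding Rb_def Nb_def by (intro continuous_intros cSg cAs cAt cSt ccc)
        fix \<phi> :: "real \<times> real \<Rightarrow> real" and E :: "real^'n^'n" assume \<phi>: "real_polynomial_function \<phi>"
        have C: "C2 (\<lambda>p. \<phi> p *\<^sub>R E)" by (rule C2_poly[OF \<phi>])
        show "integral Q (\<lambda>p. trace (Rb p ** (\<phi> p *\<^sub>R E))) = 0" using DERIV_unique[OF dAt[OF C] crAt[OF C]] .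
      qed
      have e1: "\<And>p. p \<in> Q \<Longrightarrow> cc p *\<^sub>R Na p = 2 *\<^sub>R Ss p" using Ra0 Ra_eq by blast
      have e2: "\<And>p. p \<in> Q \<Longrightarrow> cc p *\<^sub>R Nb p = 2 *\<^sub>R St p" using Rb0 Rb_eq by blast
      have RpS: "\<forall>p\<in>Q. Rp p + transpose (Rp p) = 0"
      proof (rule dens_sym)
        have cGm: "continuous_on Q (\<lambda>p. Gm (Sg p) (As p) (At p))" unfolding Gm_def
          apply (intro continuous_intros cSg cAs cAt cq)
          using q by auto (metis less_irrefl)
        show "continuous_on Q Rp" unfolding Rp_def by (intro continuous_intros cGm cAs cAt cSs cSt)
        fix \<phi> :: "real \<times> real \<Rightarrow> real" and E :: "real^'n^'n" assume \<phi>: "real_polynomial_function \<phi>"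
        define D where "D = (\<lambda>p. (wfun p * \<phi> p) *\<^sub>R (E + transpose E))"
        have pw: "real_polynomial_function (\<lambda>p. wfun p * \<phi> p)"
          by (rule real_polynomial_function.intros(4)[OF wfun_poly \<phi>])
        have adm: "adm_Sigma_var D" unfolding adm_Sigma_var_def D_def
        proof (intro conjI ballI impI)
          show "C2 (\<lambda>p. (wfun p * \<phi> p) *\<^sub>R (E + transpose E))" by (rule C2_poly[OF pw])
          fix p assume "p \<in> Q"
          show "symmetric ((wfun p * \<phi> p) *\<^sub>R (E + transpose E))"
            by (simp add: symmetric_def tp_simps add.commute)
          assume "on_boundary p"
          then show "(wfun p * \<phi> p) *\<^sub>R (E + transpose E) = 0" by (simp add: wfun_bd)
        qed
        show "integral Q (\<lambda>p. trace (Rp p ** ((wfun p * \<phi> p) *\<^sub>R (E + transpose E)))) = 0"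
          using DERIV_unique[OF dSg[OF adm] crSg[OF adm]] by (simp add: D_def)
      qed
      have "\<forall>p\<in>Q. Z p = 0"
      proof
        fix p assume p: "p \<in> Q"
        have "Rp p + transpose (Rp p) = 0" using RpS p by blast
        then have "- Z p + - Z p = 0" using Rp_Z[OF p e1[OF p] e2[OF p]] ZT[OF p] by (simp add: tp_simps)
        then show "Z p = 0" by (simp add: scaleR_2[symmetric])
      qed
      then show "cp_system Sg As At Ss St" unfolding cp_iff using e1 e2 Xs0 Xt0 by blast
    next
      assume "cp_system Sg As At Ss St"
      then have cp: "\<And>p. p \<in> Q \<Longrightarrow> cc p *\<^sub>R Na p = 2 *\<^sub>R Ss p \<and> cc p *\<^sub>R Nb p = 2 *\<^sub>R St p \<and> Z p = 0 \<and> Xs p = 0 \<and> Xt p = 0"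
        unfolding cp_iff by blast
      show "critical Sg As At Ss St" unfolding critical_def
      proof (intro conjI allI impI)
        fix D :: "real \<times> real \<Rightarrow> real^'n^'n" assume DD: "adm_Sigma_var D"
        have I: "integral Q (\<lambda>p. trace (Rp p ** D p)) = 0"
        proof (rule int0)
          fix p assume p: "p \<in> Q"
          have "Rp p = 0" using Rp_Z[OF p] cp[OF p] by simp
          then show "trace (Rp p ** D p) = 0" by (simp add: mm_simps tr_simps)
        qed
        show "((\<lambda>e. Lag (\<lambda>p. Sg p + e *\<^sub>R D p) As At Ss St) has_real_derivative 0) (at 0)"
          using dSg[OF DD] unfolding I .
      next
        fix D :: "real \<times> real \<Rightarrow> real^'n^'n" assume DD: "C2 D"
        have I: "integral Q (\<lambda>p. trace (Ra p ** D p)) = 0"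
        proof (rule int0)
          fix p assume p: "p \<in> Q"
          have "Ra p = 0" using Ra_eq[OF p] cp[OF p] by simp
          then show "trace (Ra p ** D p) = 0" by (simp add: mm_simps tr_simps)
        qed
        show "((\<lambda>e. Lag Sg (\<lambda>p. As p + e *\<^sub>R D p) At Ss St) has_real_derivative 0) (at 0)"
          using dAs[OF DD] unfolding I .
      next
        fix D :: "real \<times> real \<Rightarrow> real^'n^'n" assume DD: "C2 D"
        have I: "integral Q (\<lambda>p. trace (Rb p ** D p)) = 0"
        proof (rule int0)
          fix p assume p: "p \<in> Q"
          have "Rb p = 0" using Rb_eq[OF p] cp[OF p] by simp
          then show "trace (Rb p ** D p) = 0" by (simp add: mm_simps tr_simps)
        qed
        show "((\<lambda>e. Lag Sg As (\<lambda>p. At p + e *\<^sub>R D p) Ss St) has_real_derivative 0) (at 0)"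
          using dAt[OF DD] unfolding I .
      next
        fix D :: "real \<times> real \<Rightarrow> real^'n^'n" assume DD: "C1 D"
        have I: "integral Q (\<lambda>p. trace (D p ** Xs p)) = 0"
          by (rule int0) (use cp in \<open>simp add: mm_simps tr_simps\<close>)
        show "((\<lambda>e. Lag Sg As At (\<lambda>p. Ss p + e *\<^sub>R D p) St) has_real_derivative 0) (at 0)"
          using dSs[OF DD] unfolding I .
      next
        fix D :: "real \<times> real \<Rightarrow> real^'n^'n" assume DD: "C1 D"
        have I: "integral Q (\<lambda>p. trace (D p ** Xt p)) = 0"
          by (rule int0) (use cp in \<open>simp add: mm_simps tr_simps\<close>)
        show "((\<lambda>e. Lag Sg As At Ss (\<lambda>p. St p + e *\<^sub>R D p)) has_real_derivative 0) (at 0)"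
          using dSt[OF DD] unfolding I .
      qed
    qed
  qed
  show ?thesis using P1 P2 by blast
qed

end
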